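(* Let $\tau\in\mathbb{R}\setminus\mathbb{Q}$ and $\bar\varphi\in\mathbb{T}$, and put $\bar\varphi'=R_{1/2}\bar\varphi$. Then there exists a Denjoy map $f:\mathbb{T}\to\mathbb{T}$ such that: (a) $f$ is $\mathbb{Z}_2$-equivariant, i.e. $f\circ R_{1/2}=R_{1/2}\circ f$; (b) the rotation number of $f$ is $\rho(f)=\bar\tau$; (c) the minimal Cantor set $C$ of $f$ satisfies $R_{1/2}C=C$, and there is a Cantor function $\mathcal{P}$ associated to $C$ with $\mathcal{P}\circ R_{1/2}=R_{1/2}\circ\mathcal{P}$, $\mathcal{P}(A)=\{\overline{\varphi+n\tau}:n\in\mathbb{Z}\}\cup\{\overline{\varphi'+n\tau}:n\in\mathbb{Z}\}$ ($A$ the accessible set of $C$), and $\mathcal{P}\circ f=R_{\bar\tau}\circ\mathcal{P}$.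
   Context: $\mathbb{T}=\mathbb{R}/\mathbb{Z}$ with points $\bar\theta=\theta+\mathbb{Z}$; $R_{\bar\eta}(\bar\theta)=\overline{\theta+\eta}$. A Denjoy map is an orientation preserving homeomorphism of $\mathbb{T}$ with irrational rotation number which is not topologically conjugate to any rotation; such a map has a unique minimal set, which is a Cantor set. A Cantor set is a compact, totally disconnected, perfect subset $C\subset\mathbb{T}$, written $C=\mathbb{T}\setminus\bigcup_{k\ge0}\dot\alpha_k$ with $\{\alpha_k\}$ pairwise disjoint closed arcs; its accessible set $A$ is the set of endpoints of all $\alpha_k$. $\bar\theta_1\sim\bar\theta_2$ means equal or in the same $\alpha_k$. A Cantor function associated to $C$ is a continuous, cyclic-order-preserving map $\mathcal{P}:\mathbb{T}\to\mathbb{T}$ with $\mathcal{P}(\bar\theta_1)=\mathcal{P}(\bar\theta_2)$ iff $\bar\theta_1\sim\bar\theta_2$. A map $g:\mathbb{T}\to\mathbb{T}$ is $\mathbb{Z}_m$-equivariant if $g(\bar\theta+\tfrac1m)=g(\bar\theta)+\tfrac1m$ for all $\bar\theta$. *)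

theory Defs
  imports "HOL-Analysis.Analysis"
begin

text \<open>The circle T = R/Z is modelled as the unit circle in the complex plane,
  the point theta + Z corresponding to circ theta = exp(2 pi i theta).\<close>

definition circ :: "real \<Rightarrow> complex" where
  "circ x = cis (2 * pi * x)"

definition circle :: "complex set" where
  "circle = sphere 0 1"

definition rot :: "real \<Rightarrow> complex \<Rightarrow> complex" where
  "rot \<eta> z = circ \<eta> * z"

definition lift_of :: "(real \<Rightarrow> real) \<Rightarrow> (complex \<Rightarrow> complex) \<Rightarrow> bool" where
  "lift_of F f \<longleftrightarrow> continuous_on UNIV F \<and> (\<forall>x. F (x + 1) = F x + 1)
      \<and> (\<forall>x. f (circ x) = circ (F x))"

definition orient_pres_homeo :: "(complex \<Rightarrow> complex) \<Rightarrow> bool" where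
  "orient_pres_homeo f \<longleftrightarrow> (\<exists>g. homeomorphism circle circle f g)
      \<and> (\<exists>F. lift_of F f \<and> strict_mono F)"

definition rot_number :: "(complex \<Rightarrow> complex) \<Rightarrow> complex" where
  "rot_number f = (let F = (SOME F. lift_of F f \<and> strict_mono F)
                   in circ (lim (\<lambda>n. (F ^^ n) 0 / real n)))"

definition conj_to_rotation :: "(complex \<Rightarrow> complex) \<Rightarrow> bool" where
  "conj_to_rotation f \<longleftrightarrow> (\<exists>h h' \<eta>. homeomorphism circle circle h h'
      \<and> (\<forall>z\<in>circle. h (f z) = rot \<eta> (h z)))"

definition denjoy_map :: "(complex \<Rightarrow> complex) \<Rightarrow> bool" where
  "denjoy_map f \<longleftrightarrow> orient_pres_homeo f
      \<and> (\<exists>t. t \<notin> \<rat> \<and> rot_number f = circ t)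
      \<and> \<not> conj_to_rotation f"

definition minimal_set :: "(complex \<Rightarrow> complex) \<Rightarrow> complex set \<Rightarrow> bool" where
  "minimal_set f C \<longleftrightarrow> C \<noteq> {} \<and> C \<subseteq> circle \<and> closed C \<and> f ` C \<subseteq> C
      \<and> (\<forall>K. K \<noteq> {} \<and> closed K \<and> K \<subseteq> C \<and> f ` K \<subseteq> K \<longrightarrow> K = C)"

definition cantor_set :: "complex set \<Rightarrow> bool" where
  "cantor_set C \<longleftrightarrow> C \<subseteq> circle \<and> compact C
      \<and> (\<forall>K. K \<subseteq> C \<and> connected K \<longrightarrow> (\<exists>a. K \<subseteq> {a}))
      \<and> (\<forall>x\<in>C. x islimpt C)"

text \<open>Accessible set: endpoints of the complementary gaps (points of C which are
  isolated from one side).\<close>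
definition accessible :: "complex set \<Rightarrow> complex set" where
  "accessible C = {z \<in> C. \<exists>a \<epsilon>. circ a = z \<and> \<epsilon> > 0 \<and>
      (circ ` {a<..<a+\<epsilon>} \<inter> C = {} \<or> circ ` {a-\<epsilon><..<a} \<inter> C = {})}"

definition gap_arc :: "complex set \<Rightarrow> complex \<Rightarrow> complex \<Rightarrow> bool" where
  "gap_arc C z w \<longleftrightarrow> (\<exists>a b. circ a = z \<and> circ b = w \<and> a < b \<and> circ ` {a<..<b} \<inter> C = {})"

text \<open>z ~ w: equal or in the same complementary closed arc alpha_k.\<close>
definition sim_C :: "complex set \<Rightarrow> complex \<Rightarrow> complex \<Rightarrow> bool" where
  "sim_C C z w \<longleftrightarrow> z = w \<or> gap_arc C z w \<or> gap_arc C w z"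

definition cyclic_order_preserving :: "(complex \<Rightarrow> complex) \<Rightarrow> bool" where
  "cyclic_order_preserving P \<longleftrightarrow> (\<exists>\<Phi>. mono \<Phi> \<and> (\<forall>x. \<Phi> (x + 1) = \<Phi> x + 1)
      \<and> (\<forall>x. P (circ x) = circ (\<Phi> x)))"

definition cantor_function :: "complex set \<Rightarrow> (complex \<Rightarrow> complex) \<Rightarrow> bool" where
  "cantor_function C P \<longleftrightarrow> continuous_on circle P \<and> P ` circle \<subseteq> circle
      \<and> cyclic_order_preserving P
      \<and> (\<forall>z\<in>circle. \<forall>w\<in>circle. P z = P w \<longleftrightarrow> sim_C C z w)"

end

theory Submission imports Defs
begin

lemma circ_add: "circ (x + y) = circ x * circ y"
  by (simp add: circ_def cis_mult distrib_left)

lemma norm_circ [simp]: "norm (circ x) = 1"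
  by (simp add: circ_def)

lemma circ_in_circle [simp]: "circ x \<in> circle"
  by (simp add: circle_def)

lemma circ_int: "x \<in> \<int> \<Longrightarrow> circ x = 1"
  unfolding circ_def by (simp add: cis_multiple_2pi)

lemma circ_eq_1: "circ t = 1 \<Longrightarrow> t \<in> \<int>"
proof -
  assume h: "circ t = 1"
  define r where "r = t - of_int \<lceil>t - 1/2\<rceil>"
  have r1: "- 1/2 < r" "r \<le> 1/2" unfolding r_def
    using ceiling_correct[of "t - 1/2"] by linarith+
  have "circ r = circ t * circ (- of_int \<lceil>t - 1/2\<rceil>)"
    unfolding r_def by (metis circ_add diff_conv_add_uminus)
  also have "\<dots> = 1" using h by (simp add: circ_int)
  finally have "cis (2*pi*r) = 1" by (simp add: circ_def)
  moreover have "2*pi*r \<in> {-pi<..pi}"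
  proof -
    have a: "pi * (2*r + 1) > 0" using r1 by (intro mult_pos_pos) auto
    have b: "pi * (1 - 2*r) \<ge> 0" using r1 by (intro mult_nonneg_nonneg) auto
    have "-pi < 2*pi*r" using a by (simp add: algebra_simps)
    moreover have "2*pi*r \<le> pi" using b by (simp add: algebra_simps)
    ultimately show ?thesis by simp
  qed
  ultimately have "Arg 1 = 2*pi*r" by (metis Arg_cis)
  then have "r = 0" by simp
  then show ?thesis unfolding r_def by (metis Ints_of_int diff_eq_eq add_0)
qed

lemma circ_eq_iff: "circ x = circ y \<longleftrightarrow> x - y \<in> \<int>"
proof
  assume "circ x = circ y"
  then have "circ (x - y) = 1"
  proof -
    have "circ x = circ (x-y) * circ y" by (metis circ_add diff_add_cancel)
    moreover have "circ y \<noteq> 0" using norm_circ[of y] by (auto simp del: norm_circ)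
    ultimately show ?thesis using \<open>circ x = circ y\<close> by simp
  qed
  then show "x - y \<in> \<int>" by (rule circ_eq_1)
next
  assume "x - y \<in> \<int>"
  then show "circ x = circ y" by (metis circ_add circ_int diff_add_cancel mult_1)
qed

lemma circle_Arg: "z \<in> circle \<Longrightarrow> circ (Arg z / (2*pi)) = z"
proof -
  assume "z \<in> circle"
  then have n: "norm z = 1" by (simp add: circle_def)
  then have z0: "z \<noteq> 0" by auto
  have "circ (Arg z / (2*pi)) = cis (Arg z)" by (simp add: circ_def)
  also have "\<dots> = sgn z" by (rule cis_Arg[OF z0])
  also have "\<dots> = z" using n by (simp add: sgn_div_norm)
  finally show ?thesis .
qed

lemma circle_obtain: "z \<in> circle \<Longrightarrow> \<exists>x. z = circ x"
  using circle_Arg by metis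

lemma continuous_circ: "continuous_on A circ"
  unfolding circ_def by (intro continuous_intros)

lemma rot_circ: "rot a (circ x) = circ (x + a)"
  by (simp add: rot_def circ_add mult.commute)

lemma mono_surj_cont:
  fixes f :: "real \<Rightarrow> real"
  assumes m: "mono f" and s: "surj f"
  shows "continuous_on UNIV f"
  unfolding continuous_on_iff
proof (intro ballI allI impI)
  fix x e :: real assume e: "e > 0"
  obtain a where a: "f a = f x - e/2" using s by (metis surjD)
  obtain b where b: "f b = f x + e/2" using s by (metis surjD)
  have ax: "a < x"
  proof (rule ccontr)
    assume "\<not> a < x" then have "f x \<le> f a" using m by (simp add: monoD)
    then show False using a e by simp
  qed
  have xb: "x < b"
  proof (rule ccontr)
    assume "\<not> x < b" then have "f b \<le> f x" using m by (simp add: monoD)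
    then show False using b e by simp
  qed
  show "\<exists>d>0. \<forall>x'\<in>UNIV. dist x' x < d \<longrightarrow> dist (f x') (f x) < e"
  proof (intro exI[of _ "min (x - a) (b - x)"] conjI ballI impI)
    show "0 < min (x - a) (b - x)" using ax xb by simp
    fix x' assume "dist x' x < min (x - a) (b - x)"
    then have "a \<le> x'" "x' \<le> b" by (auto simp: dist_real_def)
    then have "f a \<le> f x'" "f x' \<le> f b" using m by (auto simp: monoD)
    then show "dist (f x') (f x) < e" using a b e by (auto simp: dist_real_def)
  qed
qed

lemma per_int:
  assumes "\<forall>x. \<Psi> (x + 1) = \<Psi> x + (1::real)"
  shows "\<Psi> (x + of_int m) = \<Psi> x + of_int m"
proof -
  have pn: "\<Psi> (y + of_nat n) = \<Psi> y + of_nat n" for y n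
  proof (induction n)
    case (Suc n)
    have "y + of_nat (Suc n) = (y + of_nat n) + 1" by simp
    have "\<Psi> ((y + of_nat n) + 1) = \<Psi> (y + of_nat n) + 1" using assms by blast
    then show ?case using Suc.IH by (simp add: ac_simps)
  qed simp
  show ?thesis
  proof (cases "m \<ge> 0")
    case True
    then show ?thesis using pn[of x "nat m"] by simp
  next
    case False
    then have "x = (x + of_int m) + of_nat (nat (- m))" by simp
    then have "\<Psi> x = \<Psi> (x + of_int m) + of_nat (nat (-m))" by (metis pn)
    then show ?thesis using False by simp
  qed
qed

lemma per_Ints:
  assumes "\<forall>x. \<Psi> (x + 1) = \<Psi> x + (1::real)" "k \<in> \<int>"
  shows "\<Psi> (x + k) = \<Psi> x + k"
  using assms(2) per_int[OF assms(1)] by (auto elim!: Ints_cases)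

lemma circ_lift_wd:
  assumes "\<forall>x. \<Psi> (x + 1) = \<Psi> x + (1::real)" "circ a = circ b"
  shows "circ (\<Psi> a) = circ (\<Psi> b)"
proof -
  have "a - b \<in> \<int>" using assms(2) circ_eq_iff by blast
  then have "\<Psi> (b + (a - b)) = \<Psi> b + (a - b)" by (rule per_Ints[OF assms(1)])
  then have "\<Psi> a - \<Psi> b \<in> \<int>" using \<open>a - b \<in> \<int>\<close> by simp
  then show ?thesis using circ_eq_iff by blast
qed

definition induced :: "(real \<Rightarrow> real) \<Rightarrow> complex \<Rightarrow> complex" where
  "induced \<Psi> z = circ (\<Psi> (Arg z / (2*pi)))"

lemma induced_circ:
  assumes "\<forall>x. \<Psi> (x + 1) = \<Psi> x + (1::real)"
  shows "induced \<Psi> (circ x) = circ (\<Psi> x)"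
  unfolding induced_def by (rule circ_lift_wd[OF assms]) (simp add: circle_Arg)

lemma circ_half: "circ (1/2) = -1"
  by (simp add: circ_def)

lemma induced_cont:
  assumes c: "continuous_on UNIV \<Psi>" and p: "\<forall>x. \<Psi> (x + 1) = \<Psi> x + (1::real)"
  shows "continuous_on circle (induced \<Psi>)"
proof -
  define S where "S = circle \<inter> - \<real>\<^sub>\<le>\<^sub>0"
  define T where "T = circle \<inter> - \<real>\<^sub>\<ge>\<^sub>0"
  have ST: "S \<union> T = circle"
  proof -
    have "z \<notin> \<real>\<^sub>\<le>\<^sub>0 \<or> z \<notin> \<real>\<^sub>\<ge>\<^sub>0" if "z \<in> circle" for z :: complex
      using that by (auto simp: circle_def complex_nonpos_Reals_iff complex_nonneg_Reals_iff
          cmod_def)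
    then show ?thesis unfolding S_def T_def by auto
  qed
  have oS: "openin (top_of_set circle) S" unfolding S_def
    by (metis openin_open_Int open_Compl closed_nonpos_Reals_complex inf_commute)
  have oT: "openin (top_of_set circle) T" unfolding T_def
    by (metis openin_open_Int open_Compl closed_nonneg_Reals_complex inf_commute)
  have cA: "continuous_on (- \<real>\<^sub>\<le>\<^sub>0) Arg"
    by (intro continuous_at_imp_continuous_on ballI continuous_at_Arg) auto
  have cS: "continuous_on S (induced \<Psi>)"
  proof -
    have "continuous_on S (\<lambda>z. Arg z / (2*pi))" unfolding S_def
      by (intro continuous_intros continuous_on_subset[OF cA]) auto
    then have "continuous_on S (\<lambda>z. \<Psi> (Arg z / (2*pi)))"
      by (rule continuous_on_compose2[OF c _ subset_UNIV])
    then show ?thesis unfolding induced_def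
      by (rule continuous_on_compose2[OF continuous_circ _ subset_UNIV])
  qed
  have cA2: "continuous_on T (\<lambda>z. Arg (- z))"
    unfolding T_def
    by (intro continuous_at_imp_continuous_on ballI continuous_at_compose[of _ uminus Arg, unfolded o_def]
        continuous_at_Arg continuous_intros) (auto simp: T_def)
  have cT': "continuous_on T (\<lambda>z. circ (\<Psi> (Arg (- z) / (2*pi) + 1/2)))"
  proof -
    have "continuous_on T (\<lambda>z. Arg (- z) / (2*pi) + 1/2)"
      by (intro continuous_intros cA2) (auto simp: T_def)
    then have "continuous_on T (\<lambda>z. \<Psi> (Arg (- z) / (2*pi) + 1/2))"
      by (rule continuous_on_compose2[OF c _ subset_UNIV])
    then show ?thesis
      by (rule continuous_on_compose2[OF continuous_circ _ subset_UNIV])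
  qed
  have cT: "continuous_on T (induced \<Psi>)"
  proof (rule continuous_on_eq[OF cT'])
    fix z assume z: "z \<in> T"
    then have zc: "z \<in> circle" "-z \<in> circle" unfolding T_def by (auto simp: circle_def)
    have "circ (Arg (- z) / (2*pi) + 1/2) = z"
      using circle_Arg[OF zc(2)] by (simp add: circ_add circ_half)
    then have "circ (Arg (- z) / (2*pi) + 1/2) = circ (Arg z / (2*pi))"
      using circle_Arg[OF zc(1)] by simp
    then show "circ (\<Psi> (Arg (- z) / (2*pi) + 1/2)) = induced \<Psi> z"
      unfolding induced_def by (rule circ_lift_wd[OF p])
  qed
  show ?thesis using continuous_on_Un_local_open[of S T] oS oT cS cT ST by simp
qed

lemma dense_orbit:
  assumes "t \<notin> \<rat>" "u < v"
  shows "\<exists>k::nat. \<exists>p::int. u < b + real k * t - of_int p \<and> b + real k * t - of_int p < v"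
proof -
  have e: "(v-u)/2 > 0" using assms(2) by simp
  obtain h k where k: "k > 0" "\<bar>of_int k * t - of_int h - ((u+v)/2 - b)\<bar> < (v-u)/2"
    by (rule sequence_of_fractional_parts_is_dense[OF assms(1) e])
  have nk: "real (nat k) = of_int k" using k by simp
  from k(2) have "- ((v-u)/2) < of_int k * t - of_int h - ((u+v)/2 - b) \<and> of_int k * t - of_int h - ((u+v)/2 - b) < (v-u)/2"
    by linarith
  then have "u < b + real (nat k) * t - of_int h \<and> b + real (nat k) * t - of_int h < v"
    unfolding nk by (simp add: field_simps)
  then show ?thesis by blast
qed

definition Mset :: "real \<Rightarrow> real \<Rightarrow> real set" where
  "Mset t p = {p + of_int n * t + of_int m / 2 | n m. True}"

lemma Mset_tau: "y \<in> Mset t p \<longleftrightarrow> y + t \<in> Mset t p"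
proof
  assume "y \<in> Mset t p"
  then obtain n m where "y = p + of_int n * t + of_int m / 2" unfolding Mset_def by auto
  then have "y + t = p + of_int (n+1) * t + of_int m / 2" by (simp add: algebra_simps)
  then show "y + t \<in> Mset t p" unfolding Mset_def by blast
next
  assume "y + t \<in> Mset t p"
  then obtain n m where "y + t = p + of_int n * t + of_int m / 2" unfolding Mset_def by auto
  then have "y = p + of_int (n-1) * t + of_int m / 2" by (simp add: algebra_simps)
  then show "y \<in> Mset t p" unfolding Mset_def by blast
qed

lemma Mset_half: "y \<in> Mset t p \<longleftrightarrow> y + 1/2 \<in> Mset t p"
proof
  assume "y \<in> Mset t p"
  then obtain n m where "y = p + of_int n * t + of_int m / 2" unfolding Mset_def by auto
  then have "y + 1/2 = p + of_int n * t + of_int (m+1) / 2" by (simp add: algebra_simps add_divide_distrib)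
  then show "y + 1/2 \<in> Mset t p" unfolding Mset_def by blast
next
  assume "y + 1/2 \<in> Mset t p"
  then obtain n m where "y + 1/2 = p + of_int n * t + of_int m / 2" unfolding Mset_def by auto
  then have "y = p + of_int n * t + of_int (m-1) / 2" by (simp add: algebra_simps diff_divide_distrib)
  then show "y \<in> Mset t p" unfolding Mset_def by blast
qed

definition Lp :: "real \<Rightarrow> complex \<Rightarrow> real" where
  "Lp p z = p + 1/2 + Arg (z * circ (1/2 - p)) / (2*pi)"

lemma cis_not_nonpos: "-pi < s \<Longrightarrow> s < pi \<Longrightarrow> cis s \<notin> \<real>\<^sub>\<le>\<^sub>0"
proof
  assume s: "-pi < s" "s < pi" and h: "cis s \<in> \<real>\<^sub>\<le>\<^sub>0"
  then have "sin s = 0" "cos s \<le> 0" by (auto simp: complex_nonpos_Reals_iff)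
  then have "s = 0" using sin_eq_0_pi s by blast
  then show False using \<open>cos s \<le> 0\<close> by simp
qed

lemma Lp_aux:
  assumes "p < x" "x < p + 1"
  shows "circ x * circ (1/2 - p) = cis (2*pi*(x - p - 1/2))"
    and "-pi < 2*pi*(x - p - 1/2)" "2*pi*(x - p - 1/2) < pi"
proof -
  have "circ x * circ (1/2 - p) = circ (x - p - 1/2 + 1)"
    by (simp add: circ_add[symmetric] algebra_simps)
  also have "\<dots> = circ (x - p - 1/2)" by (simp add: circ_eq_iff)
  finally show "circ x * circ (1/2 - p) = cis (2*pi*(x - p - 1/2))" by (simp add: circ_def)
  have a: "pi * (2*(x - p - 1/2) + 1) > 0" using assms by (intro mult_pos_pos) auto
  have b: "pi * (1 - 2*(x - p - 1/2)) > 0" using assms by (intro mult_pos_pos) auto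
  show "-pi < 2*pi*(x - p - 1/2)" using a by (simp add: algebra_simps)
  show "2*pi*(x - p - 1/2) < pi" using b by (simp add: algebra_simps)
qed

lemma Lp_circ:
  assumes "p < x" "x < p + 1"
  shows "Lp p (circ x) = x"
proof -
  have "Arg (circ x * circ (1/2 - p)) = 2*pi*(x - p - 1/2)"
    using Lp_aux[OF assms] by (simp add: Arg_cis)
  then show ?thesis unfolding Lp_def by simp
qed

lemma circle_lift_p:
  assumes "z \<in> circle" "z \<noteq> circ p"
  shows "\<exists>x. p < x \<and> x < p + 1 \<and> z = circ x"
proof -
  obtain y where y: "z = circ y" using circle_obtain assms(1) by blast
  define x where "x = y - of_int \<lfloor>y - p\<rfloor>"
  have x1: "p \<le> x" "x < p + 1" unfolding x_def by linarith+
  have cx: "circ x = z" unfolding x_def y by (simp add: circ_eq_iff)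
  have "x \<noteq> p" using cx assms(2) by auto
  then show ?thesis using x1 cx by (intro exI[of _ x]) auto
qed

lemma Lp_cont: "continuous_on (circle - {circ p}) (Lp p)"
proof -
  have "isCont (Lp p) z" if z: "z \<in> circle - {circ p}" for z
  proof -
    obtain x where x: "p < x" "x < p + 1" "z = circ x" using circle_lift_p z by blast
    have "z * circ (1/2 - p) \<notin> \<real>\<^sub>\<le>\<^sub>0"
      using Lp_aux[OF x(1,2)] cis_not_nonpos x(3) by simp
    then have "isCont Arg (z * circ (1/2 - p))" by (rule continuous_at_Arg)
    then have "isCont (\<lambda>z. Arg (z * circ (1/2 - p))) z"
      by (intro continuous_at_compose[of _ "\<lambda>z. z * circ (1/2 - p)" Arg, unfolded o_def]) 
         (auto intro!: continuous_intros)
    then show ?thesis unfolding Lp_def by (intro continuous_intros) auto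
  qed
  then show ?thesis by (intro continuous_at_imp_continuous_on) blast
qed

lemma Mset_circ: "circ ` Mset t p = {circ (p + of_int n * t) | n. True} \<union> {circ ((p + 1/2) + of_int n * t) | n. True}"
proof
  show "circ ` Mset t p \<subseteq> {circ (p + of_int n * t) | n. True} \<union> {circ ((p + 1/2) + of_int n * t) | n. True}"
  proof
    fix z assume "z \<in> circ ` Mset t p"
    then obtain n m where z: "z = circ (p + of_int n * t + of_int m / 2)" unfolding Mset_def by auto
    have m: "m = m mod 2 + (m div 2) * 2" by simp
    have "real_of_int m = real_of_int (m mod 2 + (m div 2) * 2)" using m by (rule arg_cong)
    also have "\<dots> = of_int (m mod 2) + of_int (m div 2) * 2" by (simp only: of_int_add of_int_mult of_int_numeral)
    finally have "real_of_int m = of_int (m mod 2) + of_int (m div 2) * 2" .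
    then have "(p + of_int n * t + of_int m / 2) - (p + of_int n * t + of_int (m mod 2) / 2) = of_int (m div 2)"
      by (simp add: field_simps)
    then have z2: "z = circ (p + of_int n * t + of_int (m mod 2) / 2)" unfolding z circ_eq_iff
      by simp
    have "m mod 2 = 0 \<or> m mod 2 = 1" by auto
    then show "z \<in> {circ (p + of_int n * t) | n. True} \<union> {circ ((p + 1/2) + of_int n * t) | n. True}"
    proof
      assume "m mod 2 = 0" then show ?thesis using z2 by auto
    next
      assume "m mod 2 = 1"
      then have "z = circ ((p + 1/2) + of_int n * t)" using z2 by (simp add: algebra_simps)
      then show ?thesis by auto
    qed
  qed
next
  show "{circ (p + of_int n * t) | n. True} \<union> {circ ((p + 1/2) + of_int n * t) | n. True} \<subseteq> circ ` Mset t p"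
  proof
    fix z assume "z \<in> {circ (p + of_int n * t) | n. True} \<union> {circ ((p + 1/2) + of_int n * t) | n. True}"
    then obtain n where "z = circ (p + of_int n * t + of_int 0 / 2) \<or> z = circ (p + of_int n * t + of_int 1 / 2)"
      by (auto simp: algebra_simps)
    then show "z \<in> circ ` Mset t p" unfolding Mset_def by blast
  qed
qed

lemma homeo_induced:
  assumes sm: "strict_mono F" and su: "surj F" and p: "\<forall>x. F (x + 1) = F x + (1::real)"
  shows "homeomorphism circle circle (induced F) (induced (inv F))"
proof -
  have inj: "inj F" using sm strict_mono_imp_inj_on by blast
  have fi: "F (inv F x) = x" for x using su by (simp add: surj_f_inv_f)
  have if1: "inv F (F x) = x" for x using inj by simp
  have pi: "\<forall>x. inv F (x + 1) = inv F x + 1"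
  proof
    fix x
    have "F (inv F x + 1) = x + 1" using p fi by simp
    then show "inv F (x + 1) = inv F x + 1" using if1 by metis
  qed
  have smi: "strict_mono (inv F)"
  proof (rule strict_monoI)
    fix x y :: real assume "x < y"
    show "inv F x < inv F y"
    proof (rule ccontr)
      assume "\<not> inv F x < inv F y"
      then have "F (inv F y) \<le> F (inv F x)" using sm by (simp add: strict_mono_less_eq)
      then show False using fi \<open>x < y\<close> by simp
    qed
  qed
  have sui: "surj (inv F)" using if1 by (metis surjI)
  have c1: "continuous_on UNIV F" by (rule mono_surj_cont[OF strict_mono_mono[OF sm] su])
  have c2: "continuous_on UNIV (inv F)" by (rule mono_surj_cont[OF strict_mono_mono[OF smi] sui])
  have gf: "induced (inv F) (induced F z) = z" if zc: "z \<in> circle" for z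
  proof -
    obtain x where x: "z = circ x" using zc circle_obtain by blast
    show ?thesis unfolding x induced_circ[OF p] induced_circ[OF pi] if1 ..
  qed
  have fg: "induced F (induced (inv F) z) = z" if zc: "z \<in> circle" for z
  proof -
    obtain x where x: "z = circ x" using zc circle_obtain by blast
    show ?thesis unfolding x induced_circ[OF p] induced_circ[OF pi] fi ..
  qed
  have im1: "induced F ` circle = circle"
  proof
    show "induced F ` circle \<subseteq> circle" by (auto simp: induced_def)
    show "circle \<subseteq> induced F ` circle"
    proof
      fix y assume "y \<in> circle"
      then have "y = induced F (induced (inv F) y)" using fg by simp
      moreover have "induced (inv F) y \<in> circle" by (simp add: induced_def)
      ultimately show "y \<in> induced F ` circle" by blast
    qed
  qed
  have im2: "induced (inv F) ` circle = circle"
  proof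
    show "induced (inv F) ` circle \<subseteq> circle" by (auto simp: induced_def)
    show "circle \<subseteq> induced (inv F) ` circle"
    proof
      fix y assume "y \<in> circle"
      then have "y = induced (inv F) (induced F y)" using gf by simp
      moreover have "induced F y \<in> circle" by (simp add: induced_def)
      ultimately show "y \<in> induced (inv F) ` circle" by blast
    qed
  qed
  show ?thesis unfolding homeomorphism_def
    using gf fg im1 im2 induced_cont[OF c1 p] induced_cont[OF c2 pi] by blast
qed

locale blow =
  fixes G J :: "real \<Rightarrow> real" and \<tau> \<phi> :: real
  assumes irr: "\<tau> \<notin> \<rat>"
  and Jnn: "J y \<ge> 0"
  and A1: "z < y \<Longrightarrow> G z + J z / 5 + (y - z) / 5 \<le> G y"
  and A2: "\<exists>y. G y \<le> x \<and> x \<le> G y + J y / 5"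
  and Gh: "G (y + 1/2) = G y + 1/2"
  and Jh: "J (y + 1/2) = J y"
  and JM: "J y > 0 \<longleftrightarrow> y \<in> Mset \<tau> \<phi>"
begin

definition Gp where "Gp y = G y + J y / 5"

lemma Gp_ge: "G y \<le> Gp y" using Jnn unfolding Gp_def by (simp add: divide_nonneg_pos)

lemma A1': "z < y \<Longrightarrow> Gp z + (y - z) / 5 \<le> G y"
  using A1 unfolding Gp_def by simp

lemma Gp_less: assumes "z < y" shows "Gp z < G y"
proof -
  have "(y - z) / 5 > 0" using assms by simp
  then show ?thesis using A1'[OF assms] by linarith
qed

lemma Gph: "Gp (y + 1/2) = Gp y + 1/2" unfolding Gp_def by (simp add: Gh Jh)

lemma J0: "\<not> J y > 0 \<Longrightarrow> Gp y = G y" using Jnn[of y] unfolding Gp_def by simp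

lemma J_tau: "J (y + \<tau>) > 0 \<longleftrightarrow> J y > 0"
  using JM Mset_tau by blast

definition Phi where "Phi x = (THE y. G y \<le> x \<and> x \<le> Gp y)"

lemma fiber_unique: "G y1 \<le> x \<Longrightarrow> x \<le> Gp y1 \<Longrightarrow> G y2 \<le> x \<Longrightarrow> x \<le> Gp y2 \<Longrightarrow> y1 = y2"
  using Gp_less[of y1 y2] Gp_less[of y2 y1] by (cases y1 y2 rule: linorder_cases) auto

lemma Phi: "G (Phi x) \<le> x" "x \<le> Gp (Phi x)"
proof -
  obtain y where y: "G y \<le> x" "x \<le> Gp y" using A2[of x] unfolding Gp_def by auto
  have "G (Phi x) \<le> x \<and> x \<le> Gp (Phi x)"
    unfolding Phi_def by (rule theI[of _ y]) (use y fiber_unique in blast)+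
  then show "G (Phi x) \<le> x" "x \<le> Gp (Phi x)" by auto
qed

lemma Phi_eq: "G y \<le> x \<Longrightarrow> x \<le> Gp y \<Longrightarrow> Phi x = y"
  using Phi fiber_unique by blast

lemma Phi_G [simp]: "Phi (G y) = y" by (rule Phi_eq) (auto simp: Gp_ge)
lemma Phi_Gp [simp]: "Phi (Gp y) = y" by (rule Phi_eq) (auto simp: Gp_ge)

lemma Phi_mono_le: "x \<le> x' \<Longrightarrow> Phi x \<le> Phi x'"
proof (rule ccontr)
  assume "x \<le> x'" "\<not> Phi x \<le> Phi x'"
  then have "Gp (Phi x') < G (Phi x)" by (intro Gp_less) auto
  then show False using Phi[of x] Phi[of x'] \<open>x \<le> x'\<close> by linarith
qed

lemma Phi_mono: "mono Phi" by (auto intro: monoI Phi_mono_le)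

lemma Phi_surj: "surj Phi" by (metis Phi_G surjI)

lemma Phi_cont: "continuous_on UNIV Phi"
  by (rule mono_surj_cont[OF Phi_mono Phi_surj])

lemma Phi_half: "Phi (x + 1/2) = Phi x + 1/2"
  by (rule Phi_eq) (use Phi[of x] in \<open>auto simp: Gh Gph\<close>)

lemma Phi_one: "Phi (x + 1) = Phi x + 1"
  using Phi_half[of x] Phi_half[of "x + 1/2"] by (simp add: add.commute)

lemma G_one: "G (y + 1) = G y + 1"
  using Gh[of y] Gh[of "y + 1/2"] by (simp add: add.commute)

lemma Gp_one: "Gp (y + 1) = Gp y + 1"
  using Gph[of y] Gph[of "y + 1/2"] by (simp add: add.commute)

lemma J_one: "J (y + 1) = J y"
  using Jh[of y] Jh[of "y + 1/2"] by (simp add: add.commute)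

lemma in_fiber_J: "G y \<le> x \<Longrightarrow> x \<le> Gp y \<Longrightarrow> \<not> J y > 0 \<Longrightarrow> x = G y"
  using J0[of y] by simp

definition rho where "rho y = (if J y > 0 then J (y + \<tau>) / J y else 0)"

definition F where "F x = G (Phi x + \<tau>) + rho (Phi x) * (x - G (Phi x))"

lemma F_in: "G (Phi x + \<tau>) \<le> F x" "F x \<le> Gp (Phi x + \<tau>)"
proof -
  let ?y = "Phi x"
  show "G (?y + \<tau>) \<le> F x"
    unfolding F_def rho_def using Phi[of x] Jnn[of "?y + \<tau>"]
    by (auto intro!: mult_nonneg_nonneg divide_nonneg_pos)
  show "F x \<le> Gp (?y + \<tau>)"
  proof (cases "J ?y > 0")
    case True
    have "x - G ?y \<le> J ?y / 5" using Phi[of x] unfolding Gp_def by simp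
    then have "J (?y + \<tau>) / J ?y * (x - G ?y) \<le> J (?y + \<tau>) / J ?y * (J ?y / 5)"
      using Jnn[of "?y+\<tau>"] True by (intro mult_left_mono) auto
    also have "\<dots> = J (?y + \<tau>) / 5" using True by simp
    finally show ?thesis unfolding F_def rho_def Gp_def using True by simp
  next
    case False
    then show ?thesis unfolding F_def rho_def using Gp_ge by simp
  qed
qed

lemma Phi_F: "Phi (F x) = Phi x + \<tau>"
  using F_in by (rule Phi_eq)

lemma rho_pos: "J y > 0 \<Longrightarrow> rho y > 0"
  unfolding rho_def using J_tau by auto

lemma F_strict: "strict_mono F"
proof (rule strict_monoI)
  fix x x' :: real assume xx: "x < x'"
  have le: "Phi x \<le> Phi x'" using xx Phi_mono_le by simp
  show "F x < F x'"
  proof (cases "Phi x = Phi x'")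
    case True
    let ?y = "Phi x"
    have "J ?y > 0"
    proof (rule ccontr)
      assume "\<not> J ?y > 0"
      then have "x = G ?y" "x' = G ?y" using Phi[of x] Phi[of x'] True in_fiber_J by metis+
      then show False using xx by simp
    qed
    then have "rho ?y > 0" by (rule rho_pos)
    then have "rho ?y * (x - G ?y) < rho ?y * (x' - G ?y)" using xx by simp
    then show ?thesis unfolding F_def using True by simp
  next
    case False
    then have "Phi x + \<tau> < Phi x' + \<tau>" using le by simp
    then have "Gp (Phi x + \<tau>) < G (Phi x' + \<tau>)" by (rule Gp_less)
    then show ?thesis using F_in[of x] F_in[of x'] by linarith
  qed
qed

lemma F_surj: "surj F"
proof -
  have "\<exists>x. F x = x'" for x'
  proof -
    let ?y' = "Phi x'" let ?y = "Phi x' - \<tau>"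
    have yy: "?y + \<tau> = ?y'" by simp
    show ?thesis
    proof (cases "J ?y > 0")
      case False
      then have "\<not> J ?y' > 0" using J_tau[of ?y] yy by simp
      then have x': "x' = G ?y'" using Phi[of x'] in_fiber_J by blast
      have "Phi (G ?y) = ?y" by simp
      then have "F (G ?y) = G ?y'" unfolding F_def by simp
      then show ?thesis using x' by (intro exI[of _ "G ?y"]) simp
    next
      case True
      have Jt: "J ?y' > 0" using J_tau[of ?y] yy True by simp
      define x where "x = G ?y + (x' - G ?y') / rho ?y"
      have r: "rho ?y = J ?y' / J ?y" unfolding rho_def using True yy by simp
      have r0: "rho ?y > 0" using rho_pos[OF True] .
      have a: "G ?y \<le> x" unfolding x_def using Phi[of x'] r0 by simp
      have "(x' - G ?y') / rho ?y \<le> (J ?y' / 5) / rho ?y"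
        using Phi[of x'] r0 unfolding Gp_def by (intro divide_right_mono) auto
      also have "\<dots> = J ?y / 5" using r True Jt by simp
      finally have b: "x \<le> Gp ?y" unfolding x_def Gp_def by simp
      have px: "Phi x = ?y" using a b by (rule Phi_eq)
      have "F x = G ?y' + rho ?y * ((x' - G ?y') / rho ?y)"
        unfolding F_def px using yy x_def by simp
      also have "\<dots> = x'" using r0 by simp
      finally show ?thesis by blast
    qed
  qed
  then show ?thesis by (metis surjI)
qed

lemma F_half: "F (x + 1/2) = F x + 1/2"
proof -
  have r: "rho (y + 1/2) = rho y" for y
    unfolding rho_def using Jh[of y] Jh[of "y + \<tau>"] by (simp add: ac_simps)
  have "G (Phi x + 1/2 + \<tau>) = G (Phi x + \<tau>) + 1/2" using Gh[of "Phi x + \<tau>"] by (simp add: ac_simps)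
  then show ?thesis unfolding F_def Phi_half r using Gh[of "Phi x"] by (simp add: algebra_simps)
qed

lemma F_one: "F (x + 1) = F x + 1"
  using F_half[of x] F_half[of "x + 1/2"] by (simp add: add.commute)



lemma Phi_int: "Phi (x + of_int m) = Phi x + of_int m"
  by (rule per_int) (simp add: Phi_one)

lemma F_int: "F (x + of_int m) = F x + of_int m"
  by (rule per_int) (simp add: F_one)

definition Ct where "Ct = {x. \<forall>y. \<not> (G y < x \<and> x < Gp y)}"

lemma Ct_iff: "x \<in> Ct \<longleftrightarrow> x = G (Phi x) \<or> x = Gp (Phi x)"
proof
  assume "x \<in> Ct"
  then have "\<not> (G (Phi x) < x \<and> x < Gp (Phi x))" unfolding Ct_def by blast
  then show "x = G (Phi x) \<or> x = Gp (Phi x)" using Phi[of x] by linarith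
next
  assume h: "x = G (Phi x) \<or> x = Gp (Phi x)"
  show "x \<in> Ct" unfolding Ct_def
  proof (intro CollectI allI notI)
    fix y assume y: "G y < x \<and> x < Gp y"
    then have "Phi x = y" by (intro Phi_eq) auto
    then show False using h y by auto
  qed
qed

lemma G_Ct: "G y \<in> Ct" by (simp add: Ct_iff)
lemma Gp_Ct: "Gp y \<in> Ct" by (simp add: Ct_iff)

lemma Ct_closed: "closed Ct"
proof -
  have "Ct = - (\<Union>y. {G y <..< Gp y})" unfolding Ct_def by auto
  then show ?thesis by (auto intro!: closed_Compl open_UN)
qed

lemma Ct_half: "x + 1/2 \<in> Ct \<longleftrightarrow> x \<in> Ct"
  unfolding Ct_iff Phi_half Gh Gph by auto

lemma Ct_one: "x + 1 \<in> Ct \<longleftrightarrow> x \<in> Ct"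
  using Ct_half[of x] Ct_half[of "x + 1/2"] by (simp add: add.commute)

lemma Ct_int: "x + of_int m \<in> Ct \<longleftrightarrow> x \<in> Ct"
proof -
  have pn: "y + of_nat n \<in> Ct \<longleftrightarrow> y \<in> Ct" for y n
  proof (induction n)
    case (Suc n)
    have e: "y + of_nat (Suc n) = (y + of_nat n) + 1" by simp
    show ?case unfolding e Ct_one by (rule Suc.IH)
  qed simp
  show ?thesis
  proof (cases "m \<ge> 0")
    case True
    then show ?thesis using pn[of x "nat m"] by simp
  next
    case False
    then have "x = (x + of_int m) + of_nat (nat (- m))" by simp
    then show ?thesis using pn[of "x + of_int m" "nat (-m)"] by metis
  qed
qed

lemma Ct_Ints: "k \<in> \<int> \<Longrightarrow> x + k \<in> Ct \<longleftrightarrow> x \<in> Ct"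
  using Ct_int by (auto elim!: Ints_cases)

definition C where "C = circ ` Ct"

lemma circ_in_C: "circ x \<in> C \<longleftrightarrow> x \<in> Ct"
proof
  assume "circ x \<in> C"
  then obtain c where c: "c \<in> Ct" "circ x = circ c" unfolding C_def by auto
  then have "x - c \<in> \<int>" using circ_eq_iff by blast
  then have "c + (x - c) \<in> Ct" using Ct_Ints c(1) by blast
  then show "x \<in> Ct" by simp
qed (auto simp: C_def)

lemma C_sub: "C \<subseteq> circle" unfolding C_def by auto

lemma C_compact: "compact C"
proof -
  have "C = circ ` (Ct \<inter> {0..1})"
  proof
    show "C \<subseteq> circ ` (Ct \<inter> {0..1})"
    proof
      fix z assume "z \<in> C"
      then obtain c where c: "c \<in> Ct" "z = circ c" unfolding C_def by auto
      have "c + of_int (- \<lfloor>c\<rfloor>) \<in> Ct" using Ct_int c(1) by blast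
      moreover have "circ (c + of_int (- \<lfloor>c\<rfloor>)) = z" using c(2) by (simp add: circ_eq_iff)
      moreover have "c + of_int (- \<lfloor>c\<rfloor>) \<in> {0..1}" by simp linarith
      ultimately show "z \<in> circ ` (Ct \<inter> {0..1})" by blast
    qed
  qed (auto simp: C_def)
  moreover have "compact (Ct \<inter> {0..1})" by (intro closed_Int_compact Ct_closed) auto
  ultimately show ?thesis using compact_continuous_image[OF continuous_circ] by metis
qed

lemma C_closed: "closed C" using C_compact compact_imp_closed by blast

lemma C_half: "rot (1/2) ` C = C"
proof
  show "rot (1/2) ` C \<subseteq> C" unfolding C_def by (auto simp: rot_circ circ_in_C[unfolded C_def] Ct_half)
  show "C \<subseteq> rot (1/2) ` C"
  proof
    fix z assume "z \<in> C"
    then obtain c where c: "c \<in> Ct" "z = circ c" unfolding C_def by auto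
    have "c - 1/2 \<in> Ct" using Ct_half[of "c - 1/2"] c(1) by simp
    moreover have "z = rot (1/2) (circ (c - 1/2))" using c by (simp add: rot_circ)
    ultimately show "z \<in> rot (1/2) ` C" unfolding C_def by blast
  qed
qed

lemma nbhd:
  assumes c: "c \<in> Ct" and d: "\<delta> > 0"
  shows "\<exists>y0 y1. y0 < y1 \<and> (\<forall>x'. y0 < Phi x' \<and> Phi x' < y1 \<longrightarrow> \<bar>x' - c\<bar> < \<delta>)"
proof -
  let ?y = "Phi c"
  have l: "Phi (c - \<delta>/2) \<le> ?y" "?y \<le> Phi (c + \<delta>/2)" using d by (auto intro: Phi_mono_le)
  show ?thesis
  proof (cases "Phi (c - \<delta>/2) < ?y")
    case True
    show ?thesis
    proof (intro exI conjI allI impI)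
      show "Phi (c - \<delta>/2) < ?y" by fact
      fix x' assume x': "Phi (c - \<delta>/2) < Phi x' \<and> Phi x' < ?y"
      have "c - \<delta>/2 < x'" using x' Phi_mono_le[of x' "c - \<delta>/2"] by linarith
      moreover have "x' < c" using x' Phi_mono_le[of c x'] by linarith
      ultimately show "\<bar>x' - c\<bar> < \<delta>" using d by simp
    qed
  next
    case False
    show ?thesis
    proof (cases "?y < Phi (c + \<delta>/2)")
      case True
      show ?thesis
      proof (intro exI conjI allI impI)
        show "?y < Phi (c + \<delta>/2)" by fact
        fix x' assume x': "?y < Phi x' \<and> Phi x' < Phi (c + \<delta>/2)"
        have "x' < c + \<delta>/2" using x' Phi_mono_le[of "c + \<delta>/2" x'] by linarith
        moreover have "c < x'" using x' Phi_mono_le[of x' c] by linarith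
        ultimately show "\<bar>x' - c\<bar> < \<delta>" using d by simp
      qed
    next
      case False2: False
      have e1: "Phi (c - \<delta>/2) = ?y" using False l by simp
      have e2: "Phi (c + \<delta>/2) = ?y" using False2 l by simp
      have "G ?y \<le> c - \<delta>/2" using Phi[of "c - \<delta>/2"] e1 by simp
      moreover have "c + \<delta>/2 \<le> Gp ?y" using Phi[of "c + \<delta>/2"] e2 by simp
      ultimately have "G ?y < c \<and> c < Gp ?y" using d by simp
      then show ?thesis using c unfolding Ct_def by blast
    qed
  qed
qed

lemma F_G: "F (G y) = G (y + \<tau>)" unfolding F_def by simp

lemma F_Gp: "F (Gp y) = Gp (y + \<tau>)"
proof (cases "J y > 0")
  case True
  have "F (Gp y) = G (y + \<tau>) + rho y * (Gp y - G y)" unfolding F_def by simp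
  also have "\<dots> = G (y + \<tau>) + J (y + \<tau>) / 5" using True unfolding rho_def Gp_def by simp
  finally show ?thesis unfolding Gp_def by simp
next
  case False
  then have "\<not> J (y + \<tau>) > 0" using J_tau by simp
  then show ?thesis using False J0 F_G by simp
qed

lemma F_Ct: "x \<in> Ct \<Longrightarrow> F x \<in> Ct"
proof -
  assume "x \<in> Ct"
  then have "x = G (Phi x) \<or> x = Gp (Phi x)" by (simp add: Ct_iff)
  then show ?thesis
  proof
    assume "x = G (Phi x)" then have "F x = G (Phi x + \<tau>)" using F_G by metis
    then show ?thesis using G_Ct by simp
  next
    assume "x = Gp (Phi x)" then have "F x = Gp (Phi x + \<tau>)" using F_Gp by metis
    then show ?thesis using Gp_Ct by simp
  qed
qed

abbreviation "f \<equiv> induced F"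
abbreviation "P \<equiv> induced Phi"

lemma f_circ: "f (circ x) = circ (F x)" by (rule induced_circ) (simp add: F_one)
lemma P_circ: "P (circ x) = circ (Phi x)" by (rule induced_circ) (simp add: Phi_one)

lemma f_C: "f ` C \<subseteq> C" unfolding C_def using f_circ F_Ct by auto

lemma f_iter: "(f ^^ k) (circ x) = circ ((F ^^ k) x)"
  by (induction k) (auto simp: f_circ)

lemma Phi_iter: "Phi ((F ^^ k) x) = Phi x + real k * \<tau>"
  by (induction k) (auto simp: Phi_F algebra_simps)

lemma circ_near:
  assumes "e > 0" shows "\<exists>\<delta>>0. \<forall>x'. \<bar>x' - c\<bar> < \<delta> \<longrightarrow> dist (circ x') (circ c) < e"
proof -
  have "isCont circ c" using continuous_circ[of UNIV] continuous_on_eq_continuous_at by blast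
  then show ?thesis using assms unfolding continuous_at_eps_delta dist_real_def by blast
qed

lemma minimal: "minimal_set f C"
  unfolding minimal_set_def
proof (intro conjI allI impI)
  show "C \<noteq> {}" unfolding C_def using G_Ct by blast
  show "C \<subseteq> circle" by (rule C_sub)
  show "closed C" by (rule C_closed)
  show "f ` C \<subseteq> C" by (rule f_C)
  fix K assume K: "K \<noteq> {} \<and> closed K \<and> K \<subseteq> C \<and> f ` K \<subseteq> K"
  obtain z0 where z0: "z0 \<in> K" using K by auto
  then obtain x0 where x0: "z0 = circ x0" using K C_sub circle_obtain by blast
  have fk: "(f ^^ k) z0 \<in> K" for k
    by (induction k) (use z0 K in auto)
  show "K = C"
  proof
    show "C \<subseteq> K"
    proof
      fix z assume "z \<in> C"
      then obtain c where c: "c \<in> Ct" "z = circ c" unfolding C_def by auto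
      have "\<forall>e>0. \<exists>y\<in>K. dist y z < e"
      proof (intro allI impI)
        fix e :: real assume e: "e > 0"
        obtain \<delta> where d: "\<delta> > 0" "\<forall>x'. \<bar>x' - c\<bar> < \<delta> \<longrightarrow> dist (circ x') (circ c) < e"
          using circ_near[OF e] by blast
        obtain y0 y1 where y: "y0 < y1" "\<forall>x'. y0 < Phi x' \<and> Phi x' < y1 \<longrightarrow> \<bar>x' - c\<bar> < \<delta>"
          using nbhd[OF c(1) d(1)] by blast
        obtain k p where kp: "y0 < Phi x0 + real k * \<tau> - of_int p" "Phi x0 + real k * \<tau> - of_int p < y1"
          using dense_orbit[OF irr y(1)] by blast
        define x' where "x' = (F ^^ k) x0 + of_int (- p)"
        have "Phi x' = Phi x0 + real k * \<tau> - of_int p"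
          unfolding x'_def Phi_int Phi_iter by simp
        then have "\<bar>x' - c\<bar> < \<delta>" using y(2) kp by auto
        then have "dist (circ x') z < e" using d c by simp
        moreover have "circ x' = (f ^^ k) z0" unfolding x0 f_iter x'_def
          by (simp add: circ_eq_iff)
        ultimately show "\<exists>y\<in>K. dist y z < e" using fk by metis
      qed
      then show "z \<in> K" using K closed_approachable by blast
    qed
  qed (use K in auto)
qed

lemma int_small: "t \<in> \<int> \<Longrightarrow> \<bar>t\<bar> < 1 \<Longrightarrow> (t::real) = 0"
proof -
  assume a: "t \<in> \<int>" "\<bar>t\<bar> < 1"
  from a(1) obtain z where z: "t = of_int z" by (auto elim: Ints_cases)
  then have "\<bar>z\<bar> < 1" using a(2) by linarith
  then have "z = 0" by simp
  then show ?thesis using z by simp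
qed

lemma perfect: "z \<in> C \<Longrightarrow> z islimpt C"
proof -
  assume "z \<in> C"
  then obtain c where c: "c \<in> Ct" "z = circ c" unfolding C_def by auto
  show "z islimpt C" unfolding islimpt_approachable
  proof (intro allI impI)
    fix e :: real assume e: "e > 0"
    obtain \<delta> where d: "\<delta> > 0" "\<forall>x'. \<bar>x' - c\<bar> < \<delta> \<longrightarrow> dist (circ x') (circ c) < e"
      using circ_near[OF e] by blast
    obtain y0 y1 where y: "y0 < y1" "\<forall>x'. y0 < Phi x' \<and> Phi x' < y1 \<longrightarrow> \<bar>x' - c\<bar> < min \<delta> (1/2)"
      using nbhd[OF c(1), of "min \<delta> (1/2)"] d by auto
    define a1 where "a1 = G ((2*y0 + y1)/3)"
    define a2 where "a2 = G ((y0 + 2*y1)/3)"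
    have ph: "Phi a1 = (2*y0 + y1)/3" "Phi a2 = (y0 + 2*y1)/3" unfolding a1_def a2_def by simp_all
    have "a1 \<noteq> a2" using ph y(1) by auto
    then obtain x' where x': "x' \<in> {a1, a2}" "x' \<noteq> c" by blast
    have "y0 < Phi x' \<and> Phi x' < y1" using x' ph y(1) by auto
    then have cl: "\<bar>x' - c\<bar> < min \<delta> (1/2)" using y(2) by blast
    have "x' \<in> Ct" using x' unfolding a1_def a2_def using G_Ct by auto
    moreover have "circ x' \<noteq> z"
    proof
      assume "circ x' = z"
      then have "x' - c \<in> \<int>" using c circ_eq_iff by simp
      moreover have "\<bar>x' - c\<bar> < 1" using cl by simp
      ultimately have "x' - c = 0" using int_small by blast
      then show False using x' by simp
    qed
    moreover have "dist (circ x') z < e" using d cl c by simp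
    ultimately show "\<exists>x'\<in>C. x' \<noteq> z \<and> dist x' z < e" unfolding C_def by blast
  qed
qed

lemma M_dense: "u < v \<Longrightarrow> \<exists>m \<in> Mset \<tau> \<phi>. u < m \<and> m < v"
proof -
  assume "u < v"
  from dense_orbit[OF irr this, of \<phi>] obtain k p where
    kp: "u < \<phi> + real k * \<tau> - of_int p" "\<phi> + real k * \<tau> - of_int p < v" by blast
  have "\<phi> + real k * \<tau> - of_int p = \<phi> + of_int (int k) * \<tau> + of_int (-2*p) / 2" by simp
  then show ?thesis using kp unfolding Mset_def by blast
qed

lemma gap_dense: "u < v \<Longrightarrow> \<exists>p. u < p \<and> p < v \<and> p \<notin> Ct"
proof -
  assume uv: "u < v"
  have le: "Phi u \<le> Phi v" using uv Phi_mono_le by simp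
  show ?thesis
  proof (cases "Phi u = Phi v")
    case True
    let ?y = "Phi u"
    have "G ?y \<le> u" "v \<le> Gp ?y" using Phi[of u] Phi[of v] True by auto
    then have "G ?y < (u+v)/2 \<and> (u+v)/2 < Gp ?y" using uv by auto
    then have "(u+v)/2 \<notin> Ct" unfolding Ct_def by blast
    then show ?thesis using uv by (intro exI[of _ "(u+v)/2"]) auto
  next
    case False
    then have lt: "Phi u < Phi v" using le by simp
    obtain m where m: "m \<in> Mset \<tau> \<phi>" "Phi u < m" "m < Phi v" using M_dense[OF lt] by blast
    have J: "J m > 0" using m JM by simp
    have "u \<le> Gp (Phi u)" using Phi by simp
    also have "Gp (Phi u) < G m" using m by (intro Gp_less) auto
    finally have 1: "u < G m" .
    have "Gp m < G (Phi v)" using m by (intro Gp_less) auto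
    also have "\<dots> \<le> v" using Phi by simp
    finally have 2: "Gp m < v" .
    have 3: "G m < Gp m" using J unfolding Gp_def by simp
    let ?p = "(G m + Gp m)/2"
    have "G m < ?p \<and> ?p < Gp m" using 3 by simp
    then have "?p \<notin> Ct" unfolding Ct_def by blast
    then show ?thesis using 1 2 \<open>G m < ?p \<and> ?p < Gp m\<close> by (intro exI[of _ ?p]) auto
  qed
qed

lemma gap_iff:
  assumes ab: "a < b"
  shows "circ ` {a<..<b} \<inter> C = {} \<longleftrightarrow> Phi a = Phi b"
proof
  assume h: "circ ` {a<..<b} \<inter> C = {}"
  show "Phi a = Phi b"
  proof (rule ccontr)
    assume "Phi a \<noteq> Phi b"
    then have lt: "Phi a < Phi b" using ab Phi_mono_le[of a b] by simp
    let ?y = "(Phi a + Phi b)/2"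
    have "a \<le> Gp (Phi a)" using Phi by simp
    also have "Gp (Phi a) < G ?y" using lt by (intro Gp_less) auto
    finally have 1: "a < G ?y" .
    have "G ?y \<le> Gp ?y" by (rule Gp_ge)
    also have "Gp ?y < G (Phi b)" using lt by (intro Gp_less) auto
    also have "\<dots> \<le> b" using Phi by simp
    finally have 2: "G ?y < b" .
    have "circ (G ?y) \<in> C" unfolding circ_in_C by (rule G_Ct)
    moreover have "circ (G ?y) \<in> circ ` {a<..<b}" using 1 2 by auto
    ultimately show False using h by blast
  qed
next
  assume e: "Phi a = Phi b"
  show "circ ` {a<..<b} \<inter> C = {}"
  proof (rule ccontr)
    assume "circ ` {a<..<b} \<inter> C \<noteq> {}"
    then obtain x where x: "a < x" "x < b" "circ x \<in> C" by auto
    have "Phi a \<le> Phi x" "Phi x \<le> Phi b" using x by (auto intro: Phi_mono_le)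
    then have px: "Phi x = Phi a" using e by simp
    have "G (Phi a) \<le> a" "b \<le> Gp (Phi a)" using Phi[of a] Phi[of b] e by auto
    then have "G (Phi a) < x \<and> x < Gp (Phi a)" using x by auto
    moreover have "x \<in> Ct" using x circ_in_C by simp
    ultimately show False unfolding Ct_def by blast
  qed
qed


lemma tot_disc: "K \<subseteq> C \<Longrightarrow> connected K \<Longrightarrow> \<exists>a. K \<subseteq> {a}"
proof (rule ccontr)
  assume K: "K \<subseteq> C" "connected K" and "\<not> (\<exists>a. K \<subseteq> {a})"
  then obtain z1 z2 where z: "z1 \<in> K" "z2 \<in> K" "z1 \<noteq> z2" by blast
  obtain a where a: "z1 = circ a" using z K C_sub circle_obtain by blast
  have "z2 \<in> circle" using z K C_sub by blast
  then obtain b where b: "a < b" "b < a + 1" "z2 = circ b" using circle_lift_p[of z2 a] z a by blast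
  obtain p1 where p1: "a < p1" "p1 < b" "p1 \<notin> Ct" using gap_dense[OF b(1)] by blast
  obtain p2 where p2: "b < p2" "p2 < a + 1" "p2 \<notin> Ct" using gap_dense[OF b(2)] by blast
  have Ksub: "K \<subseteq> circle - {circ p1}" using K C_sub p1(3) circ_in_C by blast
  have "connected (Lp p1 ` K)"
    by (rule connected_continuous_image[OF continuous_on_subset[OF Lp_cont Ksub] K(2)])
  moreover have "Lp p1 z2 = b" using b p1 by (simp add: Lp_circ)
  moreover have "Lp p1 z1 = a + 1"
  proof -
    have "z1 = circ (a + 1)" using a by (simp add: circ_eq_iff)
    then show ?thesis using p1 b by (simp add: Lp_circ)
  qed
  ultimately have "{b..a+1} \<subseteq> Lp p1 ` K" using z by (metis connected_contains_Icc imageI)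
  then have "p2 \<in> Lp p1 ` K" using p2 by auto
  then obtain z where zK: "z \<in> K" "Lp p1 z = p2" by auto
  then obtain x where x: "p1 < x" "x < p1 + 1" "z = circ x" using circle_lift_p Ksub by blast
  then have "x = p2" using zK Lp_circ by simp
  then have "circ p2 \<in> C" using zK x K by auto
  then show False using p2 circ_in_C by simp
qed

lemma cantor: "cantor_set C"
  unfolding cantor_set_def using C_sub C_compact tot_disc perfect by blast

lemma P_cf: "cantor_function C P"
  unfolding cantor_function_def
proof (intro conjI ballI)
  show "continuous_on circle P" by (rule induced_cont[OF Phi_cont]) (simp add: Phi_one)
  show "P ` circle \<subseteq> circle" by (auto simp: induced_def)
  show "cyclic_order_preserving P" unfolding cyclic_order_preserving_def
    by (intro exI[of _ Phi] conjI allI Phi_mono Phi_one P_circ)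
  fix z w assume zw: "z \<in> circle" "w \<in> circle"
  obtain x where x: "z = circ x" using zw circle_obtain by blast
  obtain x' where x': "w = circ x'" using zw circle_obtain by blast
  show "P z = P w \<longleftrightarrow> sim_C C z w"
  proof
    assume "P z = P w"
    then have "Phi x - Phi x' \<in> \<int>" unfolding x x' P_circ circ_eq_iff .
    then obtain m where m: "Phi x - Phi x' = of_int m" by (auto elim: Ints_cases)
    define b where "b = x' + of_int m"
    have pb: "Phi b = Phi x" unfolding b_def Phi_int using m by simp
    have cb: "circ b = w" unfolding b_def x' by (simp add: circ_eq_iff)
    show "sim_C C z w" unfolding sim_C_def
    proof (cases x b rule: linorder_cases)
      case less
      then have "gap_arc C z w" unfolding gap_arc_def using gap_iff[OF less] pb cb x by metis
      then show "z = w \<or> gap_arc C z w \<or> gap_arc C w z" by blast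
    next
      case equal then show "z = w \<or> gap_arc C z w \<or> gap_arc C w z" using cb x by simp
    next
      case greater
      then have "gap_arc C w z" unfolding gap_arc_def using gap_iff[OF greater] pb cb x by metis
      then show "z = w \<or> gap_arc C z w \<or> gap_arc C w z" by blast
    qed
  next
    have g: "gap_arc C u v \<Longrightarrow> P u = P v" for u v
    proof -
      assume "gap_arc C u v"
      then obtain a b where ab: "circ a = u" "circ b = v" "a < b" "circ ` {a<..<b} \<inter> C = {}"
        unfolding gap_arc_def by blast
      then have "Phi a = Phi b" using gap_iff by blast
      then show "P u = P v" using ab P_circ by metis
    qed
    assume "sim_C C z w"
    then show "P z = P w" unfolding sim_C_def using g by metis
  qed
qed

lemma f_half: assumes "z \<in> circle" shows  "f (rot (1/2) z) = rot (1/2) (f z)"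
proof -
  obtain x where x: "z = circ x" using assms circle_obtain by blast
  show ?thesis unfolding x rot_circ f_circ F_half by simp
qed

lemma P_half: assumes "z \<in> circle" shows  "P (rot (1/2) z) = rot (1/2) (P z)"
proof -
  obtain x where x: "z = circ x" using assms circle_obtain by blast
  show ?thesis unfolding x rot_circ P_circ Phi_half by simp
qed

lemma P_f: assumes "z \<in> circle" shows  "P (f z) = rot \<tau> (P z)"
proof -
  obtain x where x: "z = circ x" using assms circle_obtain by blast
  show ?thesis unfolding x rot_circ P_circ f_circ Phi_F by simp
qed

lemma acc_iff:
  assumes c: "c \<in> Ct"
  shows "(\<exists>\<epsilon>>0. Phi c = Phi (c + \<epsilon>) \<or> Phi (c - \<epsilon>) = Phi c) \<longleftrightarrow> J (Phi c) > 0"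
proof
  assume "\<exists>\<epsilon>>0. Phi c = Phi (c + \<epsilon>) \<or> Phi (c - \<epsilon>) = Phi c"
  then obtain e where e: "e > 0" "Phi c = Phi (c + e) \<or> Phi (c - e) = Phi c" by blast
  let ?y = "Phi c"
  from e(2) have "G ?y < Gp ?y"
  proof
    assume "Phi c = Phi (c + e)"
    then show ?thesis using Phi[of c] Phi[of "c + e"] e(1) by simp
  next
    assume "Phi (c - e) = Phi c"
    then show ?thesis using Phi[of c] Phi[of "c - e"] e(1) by simp
  qed
  then show "J ?y > 0" unfolding Gp_def by simp
next
  assume J: "J (Phi c) > 0"
  let ?y = "Phi c"
  have e: "J ?y / 5 > 0" using J by simp
  have "c = G ?y \<or> c = Gp ?y" using c Ct_iff by simp
  then show "\<exists>\<epsilon>>0. Phi c = Phi (c + \<epsilon>) \<or> Phi (c - \<epsilon>) = Phi c"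
  proof
    assume h: "c = G ?y"
    then have "c + J ?y / 5 = Gp ?y" unfolding Gp_def by simp
    then have "Phi (c + J ?y / 5) = ?y" by simp
    then show ?thesis using e by metis
  next
    assume h: "c = Gp ?y"
    then have "c - J ?y / 5 = G ?y" unfolding Gp_def by simp
    then have "Phi (c - J ?y / 5) = ?y" by simp
    then show ?thesis using e by metis
  qed
qed

lemma acc_P: "P ` accessible C = circ ` Mset \<tau> \<phi>"
proof
  show "P ` accessible C \<subseteq> circ ` Mset \<tau> \<phi>"
  proof
    fix w assume "w \<in> P ` accessible C"
    then obtain z where z: "z \<in> accessible C" "w = P z" by auto
    then obtain a e where ae: "z \<in> C" "circ a = z" "e > 0"
      "circ ` {a<..<a+e} \<inter> C = {} \<or> circ ` {a-e<..<a} \<inter> C = {}"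
      unfolding accessible_def by blast
    have aC: "a \<in> Ct" using ae circ_in_C by auto
    have "Phi a = Phi (a + e) \<or> Phi (a - e) = Phi a"
      using ae(4) gap_iff[of a "a + e"] gap_iff[of "a - e" a] ae(3) by auto
    then have "J (Phi a) > 0" using acc_iff[OF aC] ae(3) by blast
    then have "Phi a \<in> Mset \<tau> \<phi>" using JM by simp
    moreover have "w = circ (Phi a)" using z ae P_circ by metis
    ultimately show "w \<in> circ ` Mset \<tau> \<phi>" by blast
  qed
  show "circ ` Mset \<tau> \<phi> \<subseteq> P ` accessible C"
  proof
    fix w assume "w \<in> circ ` Mset \<tau> \<phi>"
    then obtain m where m: "m \<in> Mset \<tau> \<phi>" "w = circ m" by auto
    have J: "J m > 0" using m JM by simp
    have Gm: "G m \<in> Ct" by (rule G_Ct)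
    have "J (Phi (G m)) > 0" using J by simp
    then obtain e where e: "e > 0" "Phi (G m) = Phi (G m + e) \<or> Phi (G m - e) = Phi (G m)"
      using acc_iff[OF Gm] by blast
    have "circ ` {G m<..<G m+e} \<inter> C = {} \<or> circ ` {G m-e<..<G m} \<inter> C = {}"
      using e gap_iff[of "G m" "G m + e"] gap_iff[of "G m - e" "G m"] by auto
    then have "circ (G m) \<in> accessible C"
      unfolding accessible_def using e(1) Gm circ_in_C by blast
    moreover have "P (circ (G m)) = w" using m P_circ by simp
    ultimately show "w \<in> P ` accessible C" by blast
  qed
qed


lemma F_cont: "continuous_on UNIV F"
  by (rule mono_surj_cont[OF strict_mono_mono[OF F_strict] F_surj])

lemma lift_F: "lift_of F f"
  unfolding lift_of_def using F_cont F_one f_circ by blast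

lemma Phi_bound: "\<bar>Phi x - x\<bar> \<le> \<bar>Phi 0\<bar> + 1"
proof -
  define r where "r = x - of_int \<lfloor>x\<rfloor>"
  have r: "0 \<le> r" "r \<le> 1" unfolding r_def by linarith+
  have x: "x = r + of_int \<lfloor>x\<rfloor>" unfolding r_def by simp
  have "Phi 0 \<le> Phi r" "Phi r \<le> Phi 1" using r Phi_mono_le by auto
  moreover have "Phi 1 = Phi 0 + 1" using Phi_one[of 0] by simp
  moreover have "Phi x - x = Phi r - r" by (subst (1 2) x) (simp add: Phi_int)
  ultimately show ?thesis using r by linarith
qed

lemma rotnum: "rot_number f = circ \<tau>"
proof -
  define F' where "F' = (SOME F'. lift_of F' f \<and> strict_mono F')"
  have "lift_of F' f \<and> strict_mono F'"
    unfolding F'_def by (rule someI[of _ F]) (use lift_F F_strict in blast)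
  then have L: "continuous_on UNIV F'" "\<forall>x. F' (x + 1) = F' x + 1" "\<forall>x. f (circ x) = circ (F' x)"
    unfolding lift_of_def by auto
  define D where "D x = F' x - F x" for x
  have DZ: "D x \<in> \<int>" for x
  proof -
    have "circ (F' x) = circ (F x)" using L(3) f_circ by metis
    then show ?thesis unfolding D_def circ_eq_iff .
  qed
  have "D constant_on UNIV"
  proof (rule continuous_discrete_range_constant)
    show "connected (UNIV :: real set)" by simp
    show "continuous_on UNIV D" unfolding D_def by (intro continuous_intros L(1) F_cont)
    fix x :: real assume "x \<in> UNIV"
    show "\<exists>e>0. \<forall>y. y \<in> UNIV \<and> D y \<noteq> D x \<longrightarrow> e \<le> norm (D y - D x)"
    proof (intro exI[of _ 1] conjI allI impI)
      fix y assume "y \<in> UNIV \<and> D y \<noteq> D x"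
      then show "1 \<le> norm (D y - D x)" using Ints_nonzero_abs_ge1[of "D y - D x"] DZ by auto
    qed simp
  qed
  then obtain k where k: "\<And>x. D x = k" unfolding constant_on_def by blast
  have kZ: "k \<in> \<int>" using DZ k by metis
  have F'F: "F' x = F x + k" for x using k[of x] unfolding D_def by simp
  have it: "(F' ^^ n) x = (F ^^ n) x + real n * k" for n x
  proof (induction n)
    case (Suc n)
    have "real n * k \<in> \<int>" using kZ by (simp add: Ints_mult)
    then have "F ((F ^^ n) x + real n * k) = F ((F ^^ n) x) + real n * k"
      by (rule per_Ints[rotated]) (simp add: F_one)
    then show ?case using Suc by (simp add: F'F algebra_simps)
  qed simp
  define B where "B = \<bar>Phi 0\<bar> + 1"
  have bnd: "\<bar>(F ^^ n) 0 - real n * \<tau>\<bar> \<le> 2 * B" for n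
  proof -
    have "Phi ((F ^^ n) 0) = Phi 0 + real n * \<tau>" by (rule Phi_iter)
    moreover have "\<bar>Phi ((F ^^ n) 0) - (F ^^ n) 0\<bar> \<le> B" unfolding B_def by (rule Phi_bound)
    moreover have "\<bar>Phi 0\<bar> \<le> B" unfolding B_def by simp
    ultimately show ?thesis by linarith
  qed
  have lim: "(\<lambda>n. (F' ^^ n) 0 / real n) \<longlonglongrightarrow> \<tau> + k"
  proof -
    have "(\<lambda>n. (F' ^^ n) 0 / real n - (\<tau> + k)) \<longlonglongrightarrow> 0"
    proof (rule Lim_null_comparison)
      show "(\<lambda>n. 2 * B / real n) \<longlonglongrightarrow> 0" by (rule lim_const_over_n)
      show "\<forall>\<^sub>F n in sequentially. norm ((F' ^^ n) 0 / real n - (\<tau> + k)) \<le> 2 * B / real n"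
      proof (rule eventually_sequentiallyI[of 1])
        fix n :: nat assume n: "1 \<le> n"
        then have np: "real n > 0" by simp
        have "(F' ^^ n) 0 / real n - (\<tau> + k) = ((F ^^ n) 0 - real n * \<tau>) / real n"
          using np by (simp add: it field_simps)
        then show "norm ((F' ^^ n) 0 / real n - (\<tau> + k)) \<le> 2 * B / real n"
          using bnd[of n] np by (simp add: abs_divide divide_right_mono)
      qed
    qed
    then show ?thesis by (rule LIM_zero_cancel)
  qed
  have "lim (\<lambda>n. (F' ^^ n) 0 / real n) = \<tau> + k" using lim by (rule limI)
  then have "rot_number f = circ (\<tau> + k)" unfolding rot_number_def Let_def F'_def[symmetric] by simp
  also have "\<dots> = circ \<tau>" using kZ by (simp add: circ_eq_iff)
  finally show ?thesis .
qed

lemma gap_point: "circ (G \<phi> + J \<phi> / 10) \<notin> C"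
proof -
  have "\<phi> \<in> Mset \<tau> \<phi>" unfolding Mset_def by (rule CollectI, rule exI[of _ 0], rule exI[of _ 0]) simp
  then have J: "J \<phi> > 0" using JM by simp
  then have "G \<phi> < G \<phi> + J \<phi> / 10 \<and> G \<phi> + J \<phi> / 10 < Gp \<phi>" unfolding Gp_def by simp
  then have "G \<phi> + J \<phi> / 10 \<notin> Ct" unfolding Ct_def by blast
  then show ?thesis using circ_in_C by simp
qed

lemma f_circle: "f z \<in> circle" by (simp add: induced_def)

lemma not_conj: "\<not> conj_to_rotation f"
proof
  assume "conj_to_rotation f"
  then obtain h h' \<eta> where hh: "homeomorphism circle circle h h'"
    and conj: "\<forall>z\<in>circle. h (f z) = rot \<eta> (h z)" unfolding conj_to_rotation_def by blast
  have hinv: "h' (h z) = z" if "z \<in> circle" for z using hh that unfolding homeomorphism_def by blast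
  have himg: "h ` circle = circle" using hh unfolding homeomorphism_def by blast
  have hcont: "continuous_on circle h" using hh unfolding homeomorphism_def by blast
  have fit: "(f ^^ k) z \<in> circle" if "z \<in> circle" for z k
    using that by (cases k) (auto simp: f_circle)
  have hit: "h ((f ^^ k) z) = circ (real k * \<eta>) * h z" if z: "z \<in> circle" for z k
  proof (induction k)
    case 0 then show ?case by (simp add: circ_def)
  next
    case (Suc k)
    have "h ((f ^^ Suc k) z) = rot \<eta> (h ((f ^^ k) z))" using conj fit[OF z] by simp
    also have "\<dots> = circ \<eta> * (circ (real k * \<eta>) * h z)" using Suc by (simp add: rot_def)
    also have "\<dots> = circ (real (Suc k) * \<eta>) * h z" by (simp add: circ_add[symmetric] algebra_simps)
    finally show ?case .
  qed
  show False
  proof (cases "\<eta> \<in> \<rat>")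
    case True
    then obtain a b where ab: "b > 0" "\<eta> = of_int a / of_int b" by (auto elim: Rats_cases')
    define q where "q = nat b"
    have q: "real q = of_int b" "q > 0" unfolding q_def using ab by auto
    have "circ (real q * \<eta>) = 1" using ab q by (simp add: circ_int)
    then have "h ((f ^^ q) (circ 0)) = h (circ 0)" using hit[of "circ 0" q] by simp
    then have "h' (h ((f ^^ q) (circ 0))) = h' (h (circ 0))" by simp
    moreover have c0: "circ 0 \<in> circle" by simp
    moreover have c1: "(f ^^ q) (circ 0) \<in> circle" by (rule fit[OF c0])
    ultimately have "(f ^^ q) (circ 0) = circ 0" using hinv[OF c1] hinv[OF c0] by simp
    then have "circ ((F ^^ q) 0) = circ 0" by (simp add: f_iter)
    then have "(F ^^ q) 0 \<in> \<int>" using circ_eq_iff by simp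
    then obtain j where j: "(F ^^ q) 0 = of_int j" by (auto elim: Ints_cases)
    have "Phi ((F ^^ q) 0) = Phi 0 + real q * \<tau>" by (rule Phi_iter)
    moreover have "Phi (0 + of_int j) = Phi 0 + of_int j" by (rule Phi_int)
    ultimately have "real q * \<tau> = of_int j" using j by simp
    then have "\<tau> = of_int j / real q" using q by (simp add: field_simps)
    then have "\<tau> \<in> \<rat>" by simp
    then show False using irr by simp
  next
    case False
    have hC_closed: "closed (h ` C)"
      using compact_continuous_image[OF continuous_on_subset[OF hcont C_sub] C_compact]
      by (rule compact_imp_closed)
    define z0 where "z0 = circ (G 0)"
    have z0C: "z0 \<in> C" unfolding z0_def circ_in_C by (rule G_Ct)
    have "h z0 \<in> circle" using himg z0C C_sub by blast
    then obtain b where b: "h z0 = circ b" using circle_obtain by blast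
    have fkC: "(f ^^ k) z0 \<in> C" for k
      by (induction k) (use z0C f_C in auto)
    have allin: "w \<in> h ` C" if w: "w \<in> circle" for w
    proof -
      obtain c where c: "w = circ c" using w circle_obtain by blast
      have "\<forall>e>0. \<exists>y\<in>h ` C. dist y w < e"
      proof (intro allI impI)
        fix e :: real assume e: "e > 0"
        obtain \<delta> where d: "\<delta> > 0" "\<forall>x'. \<bar>x' - c\<bar> < \<delta> \<longrightarrow> dist (circ x') (circ c) < e"
          using circ_near[OF e] by blast
        have "c - \<delta> < c + \<delta>" using d by simp
        from dense_orbit[OF False this, of b] obtain k p where
          kp: "c - \<delta> < b + real k * \<eta> - of_int p" "b + real k * \<eta> - of_int p < c + \<delta>" by blast
        have "dist (circ (b + real k * \<eta> - of_int p)) w < e" using d kp c by simp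
        moreover have "circ (b + real k * \<eta> - of_int p) = h ((f ^^ k) z0)"
        proof -
          have "circ (b + real k * \<eta> - of_int p) = circ (real k * \<eta> + b)" by (simp add: circ_eq_iff)
          also have "\<dots> = circ (real k * \<eta>) * h z0" by (simp add: circ_add b)
          also have "\<dots> = h ((f ^^ k) z0)" using hit[of z0 k] z0C C_sub by auto
          finally show ?thesis .
        qed
        ultimately show "\<exists>y\<in>h ` C. dist y w < e" using fkC by auto
      qed
      then show ?thesis using hC_closed closed_approachable by blast
    qed
    let ?g = "circ (G \<phi> + J \<phi> / 10)"
    have "h ?g \<in> circle" using himg by auto
    then have "h ?g \<in> h ` C" by (rule allin)
    then obtain c where c: "c \<in> C" "h ?g = h c" by auto
    then have "?g = c" using hinv[of ?g] hinv[of c] C_sub by auto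
    then show False using gap_point c by simp
  qed
qed

lemma denjoy: "denjoy_map f"
  unfolding denjoy_map_def orient_pres_homeo_def
proof (intro conjI exI)
  show "homeomorphism circle circle f (induced (inv F))"
    by (rule homeo_induced[OF F_strict F_surj]) (simp add: F_one)
  show "lift_of F f" by (rule lift_F)
  show "strict_mono F" by (rule F_strict)
  show "\<tau> \<notin> \<rat>" by (rule irr)
  show "rot_number f = circ \<tau>" by (rule rotnum)
  show "\<not> conj_to_rotation f" by (rule not_conj)
qed

theorem main:
  "\<exists>f. denjoy_map f
    \<and> (\<forall>z\<in>circle. f (rot (1/2) z) = rot (1/2) (f z))
    \<and> rot_number f = circ \<tau>
    \<and> (\<exists>C. minimal_set f C \<and> cantor_set C \<and> rot (1/2) ` C = C
        \<and> (\<exists>P. cantor_function C P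
             \<and> (\<forall>z\<in>circle. P (rot (1/2) z) = rot (1/2) (P z))
             \<and> P ` accessible C = {circ (\<phi> + of_int n * \<tau>) | n. True}
                                 \<union> {circ ((\<phi> + 1/2) + of_int n * \<tau>) | n. True}
             \<and> (\<forall>z\<in>circle. P (f z) = rot \<tau> (P z))))"
proof (intro exI[of _ f] conjI ballI)
  show "denjoy_map f" by (rule denjoy)
  show "rot_number f = circ \<tau>" by (rule rotnum)
  fix z :: complex assume "z \<in> circle"
  then show "f (rot (1/2) z) = rot (1/2) (f z)" by (rule f_half)
next
  have acc: "P ` accessible C = {circ (\<phi> + of_int n * \<tau>) | n. True}
                                 \<union> {circ ((\<phi> + 1/2) + of_int n * \<tau>) | n. True}"
    unfolding acc_P Mset_circ ..
  show "\<exists>C. minimal_set f C \<and> cantor_set C \<and> rot (1/2) ` C = C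
        \<and> (\<exists>P. cantor_function C P
             \<and> (\<forall>z\<in>circle. P (rot (1/2) z) = rot (1/2) (P z))
             \<and> P ` accessible C = {circ (\<phi> + of_int n * \<tau>) | n. True}
                                 \<union> {circ ((\<phi> + 1/2) + of_int n * \<tau>) | n. True}
             \<and> (\<forall>z\<in>circle. P (f z) = rot \<tau> (P z)))"
    by (intro exI[of _ C] exI[of _ P] conjI ballI minimal cantor C_half P_cf acc P_half P_f)
qed


end


definition ee :: "nat \<Rightarrow> int" where
  "ee k = (if even k then int (k div 2) else - int (k div 2) - 1)"

lemma ee_surj: "\<exists>k. ee k = n"
proof (cases "n \<ge> 0")
  case True
  then show ?thesis by (intro exI[of _ "2 * nat n"]) (simp add: ee_def)
next
  case False
  have "ee (2 * nat (- n - 1) + 1) = n" using False by (simp add: ee_def)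
  then show ?thesis by blast
qed

definition ww :: "nat \<Rightarrow> real" where "ww k = (1/2) ^ k"

lemma ww_sums: "ww sums 2"
  unfolding ww_def using geometric_sums[of "1/2 :: real"] by simp

lemma ww_summable: "summable ww" using ww_sums by (rule sums_summable)
lemma ww_suminf: "suminf ww = 2" using ww_sums by (rule sums_unique[symmetric])
lemma ww_pos: "ww k > 0" unfolding ww_def by simp

lemma ceil_step: "z < y \<Longrightarrow> \<lceil>z\<rceil> + (if z \<in> \<int> then 1 else 0) \<le> \<lceil>y::real\<rceil>"
proof (cases "z \<in> \<int>")
  case True
  assume zy: "z < y"
  from True obtain m where m: "z = of_int m" by (auto elim: Ints_cases)
  have "m < \<lceil>y\<rceil>" using zy m by (simp add: less_ceiling_iff)
  then show ?thesis using True m by simp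
next
  case False
  assume "z < y"
  then show ?thesis using False ceiling_mono[of z y] by simp
qed

context
  fixes \<tau> \<phi> :: real
begin

definition dd :: "nat \<Rightarrow> real" where "dd k = \<phi> + of_int (ee k) * \<tau>"

definition cnt :: "nat \<Rightarrow> real \<Rightarrow> real" where
  "cnt k y = of_int (\<lceil>2 * (y - dd k)\<rceil> - \<lceil>- 2 * dd k\<rceil>)"

definition ind :: "nat \<Rightarrow> real \<Rightarrow> real" where
  "ind k y = (if 2 * (y - dd k) \<in> \<int> then 1 else 0)"

definition SS where "SS y = (\<Sum>k. ww k * cnt k y)"
definition JJ where "JJ y = (\<Sum>k. ww k * ind k y)"
definition GG where "GG y = (y + SS y) / 5"

lemma cnt_bounds: "2*y - 1 < cnt k y" "cnt k y < 2*y + 1"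
proof -
  have a: "of_int \<lceil>2 * (y - dd k)\<rceil> - 1 < 2 * y - 2 * dd k" "2 * y - 2 * dd k \<le> of_int \<lceil>2 * (y - dd k)\<rceil>"
    using ceiling_correct[of "2 * (y - dd k)"] by (simp_all add: algebra_simps)
  have b: "of_int \<lceil>- 2 * dd k\<rceil> - 1 < - 2 * dd k" "- 2 * dd k \<le> of_int \<lceil>- 2 * dd k\<rceil>"
    using ceiling_correct[of "- 2 * dd k"] by simp_all
  show "2*y - 1 < cnt k y" unfolding cnt_def of_int_diff using a b by linarith
  show "cnt k y < 2*y + 1" unfolding cnt_def of_int_diff using a b by linarith
qed

lemma cnt_abs: "\<bar>cnt k y\<bar> \<le> 2 * \<bar>y\<bar> + 1"
  using cnt_bounds[where k=k and y=y] by (simp add: abs_le_iff) linarith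

lemma ind_01: "0 \<le> ind k y" "ind k y \<le> 1" unfolding ind_def by auto

lemma summ_cnt: "summable (\<lambda>k. ww k * cnt k y)"
proof (rule summable_comparison_test')
  show "summable (\<lambda>k. ww k * (2 * \<bar>y\<bar> + 1))" by (intro summable_mult2 ww_summable)
  fix n :: nat
  show "norm (ww n * cnt n y) \<le> ww n * (2 * \<bar>y\<bar> + 1)"
    using cnt_abs[of n y] ww_pos[of n] by (simp add: abs_mult)
qed

lemma summ_ind: "summable (\<lambda>k. ww k * ind k y)"
proof (rule summable_comparison_test')
  show "summable ww" by (rule ww_summable)
  fix n :: nat
  show "norm (ww n * ind n y) \<le> ww n"
    using ind_01[of n y] ww_pos[of n] by (simp add: abs_mult)
qed

lemma JJ_nn: "JJ y \<ge> 0"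
  unfolding JJ_def by (intro suminf_nonneg summ_ind) (simp add: ind_01 ww_pos less_imp_le)

lemma cnt_half: "cnt k (y + 1/2) = cnt k y + 1"
proof -
  have e: "2 * (y + 1/2 - dd k) = 2 * (y - dd k) + 1" by (simp add: algebra_simps)
  show ?thesis unfolding cnt_def e ceiling_add_one by simp
qed

lemma ind_half: "ind k (y + 1/2) = ind k y"
proof -
  have e: "2 * (y + 1/2 - dd k) = 2 * (y - dd k) + 1" by (simp add: algebra_simps)
  have i: "(t + 1 \<in> \<int>) = (t \<in> \<int>)" for t :: real
    by (metis Ints_1 Ints_diff Ints_add add_diff_cancel)
  show ?thesis unfolding ind_def e i ..
qed

lemma SS_half: "SS (y + 1/2) = SS y + 2"
proof -
  have "SS (y + 1/2) = (\<Sum>k. ww k * cnt k y + ww k)" unfolding SS_def cnt_half by (simp add: algebra_simps)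
  also have "\<dots> = SS y + suminf ww" unfolding SS_def by (rule suminf_add[symmetric, OF summ_cnt ww_summable])
  finally show ?thesis using ww_suminf by simp
qed

lemma JJ_half: "JJ (y + 1/2) = JJ y" unfolding JJ_def ind_half ..

lemma GG_half: "GG (y + 1/2) = GG y + 1/2" unfolding GG_def SS_half by (simp add: field_simps)

lemma A1_conc:
  assumes zy: "z < y"
  shows "GG z + JJ z / 5 + (y - z) / 5 \<le> GG y"
proof -
  have t: "cnt k z + ind k z \<le> cnt k y" for k
  proof -
    have "2 * (z - dd k) < 2 * (y - dd k)" using zy by simp
    from ceil_step[OF this] show ?thesis unfolding cnt_def ind_def
      by (cases "2 * (z - dd k) \<in> \<int>") (simp_all, linarith+)
  qed
  have "SS z + JJ z = (\<Sum>k. ww k * cnt k z + ww k * ind k z)"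
    unfolding SS_def JJ_def by (rule suminf_add[OF summ_cnt summ_ind])
  also have "\<dots> \<le> SS y" unfolding SS_def
  proof (rule suminf_le)
    fix k show "ww k * cnt k z + ww k * ind k z \<le> ww k * cnt k y"
      using t[of k] ww_pos[of k] by (simp add: distrib_left[symmetric])
  qed (intro summable_add summ_cnt summ_ind, rule summ_cnt)
  finally show ?thesis unfolding GG_def by (simp add: field_simps)
qed

lemma JJ_pos: "JJ y > 0 \<longleftrightarrow> y \<in> Mset \<tau> \<phi>"
proof -
  have "JJ y > 0 \<longleftrightarrow> (\<exists>k. 0 < ww k * ind k y)"
    unfolding JJ_def by (rule suminf_pos_iff[OF summ_ind]) (simp add: ind_01 ww_pos less_imp_le)
  also have "\<dots> \<longleftrightarrow> (\<exists>k. 2 * (y - dd k) \<in> \<int>)" using ww_pos by (auto simp: ind_def)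
  also have "\<dots> \<longleftrightarrow> y \<in> Mset \<tau> \<phi>"
  proof
    assume "\<exists>k. 2 * (y - dd k) \<in> \<int>"
    then obtain k m where "2 * (y - dd k) = of_int m" by (auto elim: Ints_cases)
    then have "y = \<phi> + of_int (ee k) * \<tau> + of_int m / 2" unfolding dd_def by (simp add: field_simps)
    then show "y \<in> Mset \<tau> \<phi>" unfolding Mset_def by blast
  next
    assume "y \<in> Mset \<tau> \<phi>"
    then obtain n m where y: "y = \<phi> + of_int n * \<tau> + of_int m / 2" unfolding Mset_def by auto
    obtain k where k: "ee k = n" using ee_surj by blast
    have "2 * (y - dd k) = of_int m" unfolding y dd_def k by (simp add: field_simps)
    then show "\<exists>k. 2 * (y - dd k) \<in> \<int>" by (metis Ints_of_int)
  qed
  finally show ?thesis .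
qed

lemma SS_bounds: "2 * (2*y - 1) \<le> SS y" "SS y \<le> 2 * (2*y + 1)"
proof -
  have "(\<Sum>k. ww k * (2*y - 1)) = 2 * (2*y - 1)" using ww_suminf suminf_mult2[OF ww_summable] by metis
  moreover have "(\<Sum>k. ww k * (2*y - 1)) \<le> SS y" unfolding SS_def
    by (rule suminf_le) (use cnt_bounds ww_pos in \<open>auto intro: mult_left_mono less_imp_le summable_mult2 ww_summable summ_cnt\<close>)
  ultimately show "2 * (2*y - 1) \<le> SS y" by simp
  have "(\<Sum>k. ww k * (2*y + 1)) = 2 * (2*y + 1)" using ww_suminf suminf_mult2[OF ww_summable] by metis
  moreover have "SS y \<le> (\<Sum>k. ww k * (2*y + 1))" unfolding SS_def
    by (rule suminf_le) (use cnt_bounds ww_pos in \<open>auto intro: mult_left_mono less_imp_le summable_mult2 ww_summable summ_cnt\<close>)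
  ultimately show "SS y \<le> 2 * (2*y + 1)" by simp
qed

lemma cnt_left: "eventually (\<lambda>y. cnt k y = cnt k y0) (at_left y0)"
proof -
  let ?t = "2 * (y0 - dd k)"
  let ?m = "\<lceil>?t\<rceil>"
  have m1: "of_int ?m - 1 < ?t" using ceiling_correct by blast
  define b where "b = dd k + (of_int ?m - 1) / 2"
  have "b < y0" unfolding b_def using m1 by (simp add: field_simps)
  then have "eventually (\<lambda>y. y \<in> {b<..<y0}) (at_left y0)" by (rule eventually_at_left_real)
  then show ?thesis
  proof (rule eventually_mono)
    fix y assume y: "y \<in> {b<..<y0}"
    have "of_int ?m - 1 < 2 * (y - dd k)" using y unfolding b_def by (simp add: field_simps)
    moreover have "2 * (y - dd k) \<le> of_int ?m"
    proof -
      have "2 * (y - dd k) < ?t" using y by simp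
      then show ?thesis using le_of_int_ceiling[of ?t] by linarith
    qed
    ultimately have "\<lceil>2 * (y - dd k)\<rceil> = ?m" by (simp add: ceiling_eq_iff)
    then show "cnt k y = cnt k y0" unfolding cnt_def by simp
  qed
qed

lemma cnt_right: "eventually (\<lambda>y. cnt k y = cnt k y0 + ind k y0) (at_right y0)"
proof -
  let ?t = "2 * (y0 - dd k)"
  let ?m = "\<lceil>?t\<rceil>"
  show ?thesis
  proof (cases "?t \<in> \<int>")
    case True
    then have tm: "?t = of_int ?m" by (metis Ints_cases ceiling_of_int)
    have "y0 < y0 + 1/2" by simp
    then have "eventually (\<lambda>y. y \<in> {y0<..<y0 + 1/2}) (at_right y0)" by (rule eventually_at_right_real)
    then show ?thesis
    proof (rule eventually_mono)
      fix y assume y: "y \<in> {y0<..<y0 + 1/2}"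
      have "of_int (?m + 1) - 1 < 2 * (y - dd k)" "2 * (y - dd k) \<le> of_int (?m + 1)"
        using y tm by (simp_all add: field_simps)
      then have "\<lceil>2 * (y - dd k)\<rceil> = ?m + 1" by (simp only: ceiling_eq_iff)
      then show "cnt k y = cnt k y0 + ind k y0" unfolding cnt_def ind_def using True by simp
    qed
  next
    case False
    have m1: "of_int ?m - 1 < ?t" "?t \<le> of_int ?m" using ceiling_correct[of ?t] by blast+
    have "?t \<noteq> of_int ?m" using False by (metis Ints_of_int)
    with m1(2) have lt: "?t < of_int ?m" by (rule le_neq_trans)
    define b where "b = dd k + of_int ?m / 2"
    have "y0 < b" unfolding b_def using lt by (simp add: field_simps)
    then have "eventually (\<lambda>y. y \<in> {y0<..<b}) (at_right y0)" by (rule eventually_at_right_real)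
    then show ?thesis
    proof (rule eventually_mono)
      fix y assume y: "y \<in> {y0<..<b}"
      have "of_int ?m - 1 < 2 * (y - dd k)" using y m1 by (simp add: field_simps)
      moreover have "2 * (y - dd k) \<le> of_int ?m" using y unfolding b_def by (simp add: field_simps)
      ultimately have "\<lceil>2 * (y - dd k)\<rceil> = ?m" by (simp add: ceiling_eq_iff)
      then show "cnt k y = cnt k y0 + ind k y0" unfolding cnt_def ind_def using False by simp
    qed
  qed
qed

lemma unif:
  "uniform_limit {y0 - 1..y0 + 1} (\<lambda>n y. \<Sum>k<n. ww k * cnt k y) SS sequentially"
proof -
  have "uniform_limit {y0 - 1..y0 + 1} (\<lambda>n y. \<Sum>k<n. ww k * cnt k y) (\<lambda>y. \<Sum>k. ww k * cnt k y) sequentially"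
  proof (rule Weierstrass_m_test)
    show "summable (\<lambda>k. ww k * (2 * (\<bar>y0\<bar> + 1) + 1))" by (intro summable_mult2 ww_summable)
    fix k :: nat and y :: real assume y: "y \<in> {y0 - 1..y0 + 1}"
    have "\<bar>y\<bar> \<le> \<bar>y0\<bar> + 1" using y by auto
    then have "\<bar>cnt k y\<bar> \<le> 2 * \<bar>y0\<bar> + 2 + 1" using cnt_abs[where k=k and y=y] by linarith
    then have "\<bar>cnt k y\<bar> \<le> 2 * (\<bar>y0\<bar> + 1) + 1" by (simp add: algebra_simps)
    then show "norm (ww k * cnt k y) \<le> ww k * (2 * (\<bar>y0\<bar> + 1) + 1)"
      using ww_pos[of k] by (simp add: abs_mult mult_left_mono)
  qed
  then show ?thesis unfolding SS_def .
qed

lemma SS_left: "(SS \<longlongrightarrow> SS y0) (at_left y0)"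
proof (rule swap_uniform_limit'[OF _ _ unif[of y0]])
  show "\<forall>\<^sub>F n in sequentially. ((\<lambda>y. \<Sum>k<n. ww k * cnt k y) \<longlongrightarrow> (\<Sum>k<n. ww k * cnt k y0)) (at_left y0)"
  proof (intro always_eventually allI)
    fix n
    have "eventually (\<lambda>y. \<forall>k\<in>{..<n}. cnt k y = cnt k y0) (at_left y0)"
      by (rule eventually_ball_finite) (auto intro: cnt_left)
    then have "eventually (\<lambda>y. (\<Sum>k<n. ww k * cnt k y) = (\<Sum>k<n. ww k * cnt k y0)) (at_left y0)"
      by (rule eventually_mono) simp
    then show "((\<lambda>y. \<Sum>k<n. ww k * cnt k y) \<longlongrightarrow> (\<Sum>k<n. ww k * cnt k y0)) (at_left y0)"
      by (rule tendsto_eventually)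
  qed
  show "(\<lambda>n. \<Sum>k<n. ww k * cnt k y0) \<longlonglongrightarrow> SS y0"
    unfolding SS_def by (rule summable_LIMSEQ[OF summ_cnt])
  have "y0 - 1 < y0" by simp
  then have "eventually (\<lambda>y. y \<in> {y0 - 1<..<y0}) (at_left y0)" by (rule eventually_at_left_real)
  then show "\<forall>\<^sub>F y in at_left y0. y \<in> {y0 - 1..y0 + 1}" by (rule eventually_mono) auto
qed simp

lemma SS_right: "(SS \<longlongrightarrow> SS y0 + JJ y0) (at_right y0)"
proof (rule swap_uniform_limit'[OF _ _ unif[of y0]])
  show "\<forall>\<^sub>F n in sequentially. ((\<lambda>y. \<Sum>k<n. ww k * cnt k y) \<longlongrightarrow> (\<Sum>k<n. ww k * cnt k y0 + ww k * ind k y0)) (at_right y0)"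
  proof (intro always_eventually allI)
    fix n
    have "eventually (\<lambda>y. \<forall>k\<in>{..<n}. cnt k y = cnt k y0 + ind k y0) (at_right y0)"
      by (rule eventually_ball_finite) (auto intro: cnt_right)
    then have "eventually (\<lambda>y. (\<Sum>k<n. ww k * cnt k y) = (\<Sum>k<n. ww k * cnt k y0 + ww k * ind k y0)) (at_right y0)"
      by (rule eventually_mono) (simp add: distrib_left)
    then show "((\<lambda>y. \<Sum>k<n. ww k * cnt k y) \<longlongrightarrow> (\<Sum>k<n. ww k * cnt k y0 + ww k * ind k y0)) (at_right y0)"
      by (rule tendsto_eventually)
  qed
  have "SS y0 + JJ y0 = (\<Sum>k. ww k * cnt k y0 + ww k * ind k y0)"
    unfolding SS_def JJ_def by (rule suminf_add[OF summ_cnt summ_ind])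
  then show "(\<lambda>n. \<Sum>k<n. ww k * cnt k y0 + ww k * ind k y0) \<longlonglongrightarrow> SS y0 + JJ y0"
    by (simp add: summable_LIMSEQ summable_add summ_cnt summ_ind)
  have "y0 < y0 + 1" by simp
  then have "eventually (\<lambda>y. y \<in> {y0<..<y0 + 1}) (at_right y0)" by (rule eventually_at_right_real)
  then show "\<forall>\<^sub>F y in at_right y0. y \<in> {y0 - 1..y0 + 1}" by (rule eventually_mono) auto
qed simp

lemma A2_conc: "\<exists>y. GG y \<le> x \<and> x \<le> GG y + JJ y / 5"
proof -
  define A where "A = {y. GG y \<le> x}"
  have GGb: "y - 2/5 \<le> GG y" "GG y \<le> y + 2/5" for y
    using SS_bounds[of y] unfolding GG_def by (simp_all add: field_simps)
  have neA: "x - 1 \<in> A" unfolding A_def using GGb(2)[of "x - 1"] by simp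
  have bdd: "bdd_above A"
  proof (rule bdd_aboveI[of _ "x + 1"])
    fix y assume "y \<in> A"
    then have "GG y \<le> x" by (simp add: A_def)
    then show "y \<le> x + 1" using GGb(1)[of y] by linarith
  qed
  define ys where "ys = Sup A"
  have ub: "y \<in> A \<Longrightarrow> y \<le> ys" for y unfolding ys_def by (rule cSup_upper[OF _ bdd])
  have l: "GG ys \<le> x"
  proof (rule ccontr)
    assume "\<not> GG ys \<le> x"
    then have eta: "GG ys - x > 0" by simp
    define \<eta> where "\<eta> = GG ys - x"
    have "eventually (\<lambda>y. dist (SS y) (SS ys) < 5 * \<eta> / 2) (at_left ys)"
      using tendstoD[OF SS_left[of ys], of "5 * \<eta> / 2"] eta \<eta>_def by simp
    moreover have "eventually (\<lambda>y. y \<in> {ys - 5 * \<eta> / 2<..<ys}) (at_left ys)"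
      by (rule eventually_at_left_real) (use eta \<eta>_def in simp)
    ultimately have "eventually (\<lambda>y. x < GG y) (at_left ys)"
    proof eventually_elim
      case (elim y)
      then have "\<bar>SS y - SS ys\<bar> < 5 * \<eta> / 2" "ys - 5 * \<eta> / 2 < y"
        by (auto simp: dist_real_def)
      then have "SS ys - 5 * \<eta> / 2 < SS y" "ys - 5 * \<eta> / 2 < y" by linarith+
      moreover have "5 * \<eta> = ys + SS ys - 5 * x" unfolding \<eta>_def GG_def by (simp add: field_simps)
      ultimately have "5 * x < y + SS y" by linarith
      then show ?case unfolding GG_def by simp
    qed
    then obtain b where b: "b < ys" "\<And>y. b < y \<Longrightarrow> y < ys \<Longrightarrow> x < GG y"
      unfolding eventually_at_left_field by blast
    obtain a where a: "a \<in> A" "b < a" using less_cSup_iff[of A b] neA bdd b(1) ys_def by auto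
    have "a \<le> ys" using ub a by simp
    moreover have "ys \<notin> A" using \<open>\<not> GG ys \<le> x\<close> A_def by simp
    ultimately have "a < ys" using a by (cases "a = ys") auto
    then show False using b a A_def by force
  qed
  have r: "x \<le> GG ys + JJ ys / 5"
  proof (rule ccontr)
    assume "\<not> x \<le> GG ys + JJ ys / 5"
    then have eta: "x - (GG ys + JJ ys / 5) > 0" by simp
    define \<eta> where "\<eta> = x - (GG ys + JJ ys / 5)"
    have "eventually (\<lambda>y. dist (SS y) (SS ys + JJ ys) < 5 * \<eta> / 2) (at_right ys)"
      using tendstoD[OF SS_right[of ys], of "5 * \<eta> / 2"] eta \<eta>_def by simp
    moreover have "eventually (\<lambda>y. y \<in> {ys<..<ys + 5 * \<eta> / 2}) (at_right ys)"
      by (rule eventually_at_right_real) (use eta \<eta>_def in simp)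
    ultimately have "eventually (\<lambda>y. ys < y \<and> GG y \<le> x) (at_right ys)"
    proof eventually_elim
      case (elim y)
      then have "\<bar>SS y - (SS ys + JJ ys)\<bar> < 5 * \<eta> / 2" "y < ys + 5 * \<eta> / 2" "ys < y"
        by (auto simp: dist_real_def)
      then have "SS y < SS ys + JJ ys + 5 * \<eta> / 2" "y < ys + 5 * \<eta> / 2" "ys < y" by linarith+
      moreover have "5 * \<eta> = 5 * x - ys - SS ys - JJ ys" unfolding \<eta>_def GG_def by (simp add: field_simps)
      ultimately have "y + SS y \<le> 5 * x" "ys < y" by linarith+
      then show ?case unfolding GG_def by simp
    qed
    then obtain y where "ys < y" "GG y \<le> x" using eventually_happens[of _ "at_right ys"] by fastforce
    then show False using ub A_def by force
  qed
  show ?thesis using l r by blast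
qed

lemma blow_inst: "\<tau> \<notin> \<rat> \<Longrightarrow> blow GG JJ \<tau> \<phi>"
  by (unfold_locales) (auto simp: JJ_nn A1_conc A2_conc GG_half JJ_half JJ_pos)

end


theorem proposition3p3:
  fixes \<tau> \<phi> :: real
  assumes "\<tau> \<notin> \<rat>"
  shows "\<exists>f. denjoy_map f
    \<and> (\<forall>z\<in>circle. f (rot (1/2) z) = rot (1/2) (f z))
    \<and> rot_number f = circ \<tau>
    \<and> (\<exists>C. minimal_set f C \<and> cantor_set C \<and> rot (1/2) ` C = C
        \<and> (\<exists>P. cantor_function C P
             \<and> (\<forall>z\<in>circle. P (rot (1/2) z) = rot (1/2) (P z))
             \<and> P ` accessible C = {circ (\<phi> + of_int n * \<tau>) | n. True}
                                 \<union> {circ ((\<phi> + 1/2) + of_int n * \<tau>) | n. True}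
             \<and> (\<forall>z\<in>circle. P (f z) = rot \<tau> (P z))))"
  using blow.main[OF blow_inst[OF assms]] .

end
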